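(* Let $\delta\in(0,1)$. For any $\delta$-PAC algorithm and any bandit model $\boldsymbol{\mu}=(\mu_1,\dots,\mu_K)$ (with means in the exponential family's mean space) having a unique best arm, and any cost means $\boldsymbol{c}$, \[ \mathbb{E}_{\boldsymbol{\mu}\times\boldsymbol{c}}\left[J(\tau_\delta)\right]\ \ge\ T^*(\boldsymbol{\mu})\log\frac{1}{\delta}+o\!\left(\log\frac{1}{\delta}\right), \] where $T^*(\boldsymbol{\mu})$ is defined by \[ T^*(\boldsymbol{\mu})^{-1}=\sup_{\boldsymbol{w}\in\Sigma_K}\ \inf_{\boldsymbol{\lambda}:\,a^*(\boldsymbol{\lambda})\neq a^*(\boldsymbol{\mu})}\ \sum_{a=1}^K\frac{w_a}{c_a}\,d(\mu_a,\lambda_a). \]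
   Context: Cost-aware best arm identification. There are $K$ arms $\mathcal{A}=\{1,\dots,K\}$. The reward distribution of arm $a$ is $\nu_{\mu_a}$, a member of a one-parameter natural exponential family $\mathcal{P}=\{\nu_\mu:\ \nu_\mu(dx)=h(x)\exp(\theta_\mu x-b(\theta_\mu)),\ \mu\in[0,1]\}$ parametrized by its mean $\mu$, with $b$ convex and twice differentiable and finite moment generating function; $d(\mu,\mu')$ denotes the KL divergence from $\nu_\mu$ to $\nu_{\mu'}$. The cost distribution of arm $a$ is $\nu_{c_a}$ with mean $c_a$, supported in $[\ell,1]$ for a constant $\ell>0$. The best arm $a^*(\boldsymbol{\mu})=\arg\max_a\mu_a$ is assumed unique. At each round $t\ge1$ an algorithm chooses $A_t\in\mathcal{A}$ based on past observations and observes a reward $R_t\sim\nu_{\mu_{A_t}}$ and a cost $C_t\sim\nu_{c_{A_t}}$, drawn independently (and independently of the past). $N_a(t)$ is the number of pulls of arm $a$ up to time $t$, and $J(t)=\sum_{k=1}^tC_k$ is the cumulative cost. An algorithm consists of a sampling rule, a stopping time $\tau_\delta$ and a decision $\hat a$; it is $\delta$-PAC if for every reward/cost instance $(\boldsymbol{\mu},\boldsymbol{c})$, $\mathbb{P}_{\boldsymbol{\mu}\times\boldsymbol{c}}(\hat a\neq a^*(\boldsymbol{\mu}))\le\delta$ and $\mathbb{P}_{\boldsymbol{\mu}\times\boldsymbol{c}}(\tau_\delta<\infty)=1$. $\Sigma_K=\{\boldsymbol{w}\in\mathbb{R}_+^K:\sum_a w_a=1\}$. In the infimum, $\boldsymbol{\lambda}$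 ranges over bandit models in the same family with a unique best arm different from $a^*(\boldsymbol{\mu})$. *)

theory Defs
  imports "HOL-Probability.Probability"
begin

definition is_best :: "('k \<Rightarrow> real) \<Rightarrow> 'k \<Rightarrow> bool" where
  "is_best mu a \<longleftrightarrow> (\<forall>b. b \<noteq> a \<longrightarrow> mu b < mu a)"

definition unique_best :: "('k \<Rightarrow> real) \<Rightarrow> bool" where
  "unique_best mu \<longleftrightarrow> (\<exists>a. is_best mu a)"

definition best_arm :: "('k \<Rightarrow> real) \<Rightarrow> 'k" where
  "best_arm mu = (THE a. is_best mu a)"

definition Alt :: "('k \<Rightarrow> real) \<Rightarrow> ('k \<Rightarrow> real) set" where
  "Alt mu = {lam. (\<forall>a. lam a \<in> {0..1}) \<and> unique_best lam \<and> best_arm lam \<noteq> best_arm mu}"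

definition prob_simplex :: "('k::finite \<Rightarrow> real) set" where
  "prob_simplex = {w. (\<forall>a. 0 \<le> w a) \<and> (\<Sum>a\<in>UNIV. w a) = 1}"

definition expfam_nu :: "real measure \<Rightarrow> (real \<Rightarrow> real) \<Rightarrow> (real \<Rightarrow> real) \<Rightarrow> real \<Rightarrow> real measure" where
  "expfam_nu H theta b m = density H (\<lambda>x. ennreal (exp (theta m * x - b (theta m))))"

definition exp_family :: "real measure \<Rightarrow> (real \<Rightarrow> real) \<Rightarrow> (real \<Rightarrow> real) \<Rightarrow> real set \<Rightarrow> bool" where
  "exp_family H theta b Theta \<longleftrightarrow>
     sets H = sets borel \<and> open Theta \<and> convex Theta \<and> theta ` {0..1} \<subseteq> Theta \<and>
     convex_on Theta b \<and>
     (\<exists>b'. \<forall>x\<in>Theta. (b has_real_derivative b' x) (at x) \<and> b' differentiable (at x)) \<and>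
     (\<forall>m\<in>{0..1}. prob_space (expfam_nu H theta b m) \<and>
        integrable (expfam_nu H theta b m) (\<lambda>x. x) \<and>
        (\<integral>x. x \<partial>expfam_nu H theta b m) = m \<and>
        (\<forall>s. integrable (expfam_nu H theta b m) (\<lambda>x. exp (s * x))))"

text \<open>KL divergence d(m,m') from nu_m to nu_m' (natural logarithm):
  KL_divergence b M N is the integral over N of log (dN/dM).\<close>
definition kl :: "(real \<Rightarrow> real measure) \<Rightarrow> real \<Rightarrow> real \<Rightarrow> real" where
  "kl nu m m' = KL_divergence (exp 1) (nu m') (nu m)"

definition cost_family :: "(real \<Rightarrow> real measure) \<Rightarrow> real \<Rightarrow> bool" where
  "cost_family nuc l \<longleftrightarrow> 0 < l \<and> l \<le> 1 \<and>
     (\<forall>c\<in>{l..1}. prob_space (nuc c) \<and> sets (nuc c) = sets borel \<and>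
        (AE x in nuc c. x \<in> {l..1}) \<and> integrable (nuc c) (\<lambda>x. x) \<and> (\<integral>x. x \<partial>nuc c) = c)"

type_synonym 'k obs = "'k \<times> real \<times> real"  (* (arm, reward, cost) *)

text \<open>An algorithm: given internal randomisation u and the observation sequence
  (observation s = the s-th observation, s = 0,1,...), at time t (t observations so far)
  it chooses the next arm, decides whether to stop, and recommends an arm.\<close>
record 'k alg =
  samp :: "nat \<Rightarrow> real \<Rightarrow> (nat \<Rightarrow> 'k obs) \<Rightarrow> 'k"
  stp  :: "nat \<Rightarrow> real \<Rightarrow> (nat \<Rightarrow> 'k obs) \<Rightarrow> bool"
  dec  :: "nat \<Rightarrow> real \<Rightarrow> (nat \<Rightarrow> 'k obs) \<Rightarrow> 'k"

definition obsM :: "(nat \<Rightarrow> 'k obs) measure" where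
  "obsM = PiM UNIV (\<lambda>_. count_space UNIV \<Otimes>\<^sub>M (borel \<Otimes>\<^sub>M borel))"

definition valid_alg :: "'k alg \<Rightarrow> bool" where
  "valid_alg A \<longleftrightarrow>
     (\<forall>t. (\<lambda>(u, h). samp A t u h) \<in> borel \<Otimes>\<^sub>M obsM \<rightarrow>\<^sub>M count_space UNIV \<and>
          (\<lambda>(u, h). stp A t u h) \<in> borel \<Otimes>\<^sub>M obsM \<rightarrow>\<^sub>M count_space UNIV \<and>
          (\<lambda>(u, h). dec A t u h) \<in> borel \<Otimes>\<^sub>M obsM \<rightarrow>\<^sub>M count_space UNIV) \<and>
     (\<forall>t u h h'. (\<forall>s<t. h s = h' s) \<longrightarrow>
          samp A t u h = samp A t u h' \<and> stp A t u h = stp A t u h' \<and> dec A t u h = dec A t u h')"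

definition list_fun :: "'a list \<Rightarrow> nat \<Rightarrow> 'a" where
  "list_fun xs = (\<lambda>s. if s < length xs then xs ! s else undefined)"

text \<open>Interaction with the environment. Z (a, n) = (reward, cost) of the (n+1)-th pull of arm a.\<close>
primrec hist :: "'k alg \<Rightarrow> ('k \<times> nat \<Rightarrow> real \<times> real) \<Rightarrow> real \<Rightarrow> nat \<Rightarrow> 'k obs list" where
  "hist A Z u 0 = []"
| "hist A Z u (Suc t) =
     (let h = hist A Z u t; a = samp A t u (list_fun h)
      in h @ [(a, Z (a, length (filter (\<lambda>ob. fst ob = a) h)))])"

definition obsf :: "'k alg \<Rightarrow> ('k \<times> nat \<Rightarrow> real \<times> real) \<Rightarrow> real \<Rightarrow> nat \<Rightarrow> 'k obs" where
  "obsf A Z u s = last (hist A Z u (Suc s))"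

definition stops :: "'k alg \<Rightarrow> ('k \<times> nat \<Rightarrow> real \<times> real) \<Rightarrow> real \<Rightarrow> bool" where
  "stops A Z u \<longleftrightarrow> (\<exists>t. stp A t u (obsf A Z u))"

definition tau :: "'k alg \<Rightarrow> ('k \<times> nat \<Rightarrow> real \<times> real) \<Rightarrow> real \<Rightarrow> nat" where
  "tau A Z u = (LEAST t. stp A t u (obsf A Z u))"

definition decision :: "'k alg \<Rightarrow> ('k \<times> nat \<Rightarrow> real \<times> real) \<Rightarrow> real \<Rightarrow> 'k" where
  "decision A Z u = dec A (tau A Z u) u (obsf A Z u)"

definition Jcost :: "'k alg \<Rightarrow> ('k \<times> nat \<Rightarrow> real \<times> real) \<Rightarrow> real \<Rightarrow> ennreal" where
  "Jcost A Z u = (if stops A Z u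
     then (\<Sum>s<tau A Z u. ennreal (snd (snd (obsf A Z u s)))) else \<infinity>)"

definition inst_measure :: "(real \<Rightarrow> real measure) \<Rightarrow> (real \<Rightarrow> real measure) \<Rightarrow>
    ('k \<Rightarrow> real) \<Rightarrow> ('k \<Rightarrow> real) \<Rightarrow> (('k \<times> nat \<Rightarrow> real \<times> real) \<times> real) measure" where
  "inst_measure nu nuc mu c =
     PiM UNIV (\<lambda>p. nu (mu (fst p)) \<Otimes>\<^sub>M nuc (c (fst p))) \<Otimes>\<^sub>M uniform_measure lborel {0..1}"

definition is_PAC :: "(real \<Rightarrow> real measure) \<Rightarrow> (real \<Rightarrow> real measure) \<Rightarrow> real \<Rightarrow> real \<Rightarrow> 'k alg \<Rightarrow> bool" where
  "is_PAC nu nuc l delta A \<longleftrightarrow>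
     (\<forall>mu c. (\<forall>a. mu a \<in> {0..1}) \<longrightarrow> (\<forall>a. c a \<in> {l..1}) \<longrightarrow> unique_best mu \<longrightarrow>
        measure (inst_measure nu nuc mu c)
          {\<omega> \<in> space (inst_measure nu nuc mu c).
             stops A (fst \<omega>) (snd \<omega>) \<and> decision A (fst \<omega>) (snd \<omega>) \<noteq> best_arm mu} \<le> delta \<and>
        (AE \<omega> in inst_measure nu nuc mu c. stops A (fst \<omega>) (snd \<omega>)))"

definition expected_cost :: "(real \<Rightarrow> real measure) \<Rightarrow> (real \<Rightarrow> real measure) \<Rightarrow>
    ('k \<Rightarrow> real) \<Rightarrow> ('k \<Rightarrow> real) \<Rightarrow> 'k alg \<Rightarrow> ereal" where
  "expected_cost nu nuc mu c A =
     enn2ereal (\<integral>\<^sup>+ \<omega>. Jcost A (fst \<omega>) (snd \<omega>) \<partial>inst_measure nu nuc mu c)"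

definition Tstar :: "(real \<Rightarrow> real measure) \<Rightarrow> ('k::finite \<Rightarrow> real) \<Rightarrow> ('k \<Rightarrow> real) \<Rightarrow> ereal" where
  "Tstar nu mu c = 1 / (SUP w\<in>prob_simplex. INF lam\<in>Alt mu.
       ereal (\<Sum>a\<in>UNIV. w a / c a * kl nu (mu a) (lam a)))"

end

theory Submission
  imports Defs
begin


definition cnt :: "'k alg \<Rightarrow> ('k \<times> nat \<Rightarrow> real \<times> real) \<Rightarrow> real \<Rightarrow> nat \<Rightarrow> 'k \<Rightarrow> nat" where
  "cnt A Z u t a = length (filter (\<lambda>ob. fst ob = a) (hist A Z u t))"

definition arm :: "'k alg \<Rightarrow> ('k \<times> nat \<Rightarrow> real \<times> real) \<Rightarrow> real \<Rightarrow> nat \<Rightarrow> 'k" where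
  "arm A Z u t = samp A t u (list_fun (hist A Z u t))"

lemma hist_Suc': "hist A Z u (Suc t) = hist A Z u t @
   [(arm A Z u t, Z (arm A Z u t, cnt A Z u t (arm A Z u t)))]"
  by (simp add: Let_def cnt_def arm_def)

declare hist.simps(2)[simp del]

lemma length_hist[simp]: "length (hist A Z u t) = t"
  by (induction t) (simp_all add: hist_Suc')

lemma obsf_eq: "obsf A Z u s = (arm A Z u s, Z (arm A Z u s, cnt A Z u s (arm A Z u s)))"
  unfolding obsf_def by (simp add: hist_Suc')

lemma hist_nth: "s < t \<Longrightarrow> hist A Z u t ! s = obsf A Z u s"
proof (induction t)
  case 0 then show ?case by simp
next
  case (Suc t)
  show ?case
  proof (cases "s < t")
    case True then show ?thesis using Suc by (simp add: hist_Suc' nth_append)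
  next
    case False then have "s = t" using Suc by simp
    then show ?thesis by (simp add: hist_Suc' nth_append obsf_eq)
  qed
qed

lemma list_fun_hist: "s < t \<Longrightarrow> list_fun (hist A Z u t) s = obsf A Z u s"
  by (simp add: list_fun_def hist_nth)

lemma hist_eq_map: "hist A Z u t = map (obsf A Z u) [0..<t]"
  by (rule nth_equalityI) (simp_all add: hist_nth)

lemma valid_stp: assumes "valid_alg A" "s \<le> t"
  shows "stp A s u (obsf A Z u) = stp A s u (list_fun (hist A Z u t))"
proof -
  have "\<forall>s'<s. obsf A Z u s' = list_fun (hist A Z u t) s'" using assms(2) by (auto simp: list_fun_hist)
  then show ?thesis using assms(1) unfolding valid_alg_def by blast
qed

lemma valid_dec: assumes "valid_alg A" "s \<le> t"
  shows "dec A s u (obsf A Z u) = dec A s u (list_fun (hist A Z u t))"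
proof -
  have "\<forall>s'<s. obsf A Z u s' = list_fun (hist A Z u t) s'" using assms(2) by (auto simp: list_fun_hist)
  then show ?thesis using assms(1) unfolding valid_alg_def by blast
qed

lemma cnt_le: "cnt A Z u t a \<le> t"
  unfolding cnt_def by (metis length_filter_le length_hist)

lemma cnt_Suc: "cnt A Z u (Suc t) a = cnt A Z u t a + (if arm A Z u t = a then 1 else 0)"
  by (simp add: cnt_def hist_Suc')

lemma hist_local:
  "cnt A Z u t a \<le> n \<Longrightarrow> hist A (Z((a,n):=x)) u t = hist A Z u t"
proof (induction t)
  case 0 then show ?case by simp
next
  case (Suc t)
  have le: "cnt A Z u t a \<le> n" using Suc.prems cnt_Suc[of A Z u t a] by simp
  have IH: "hist A (Z((a,n):=x)) u t = hist A Z u t" by (rule Suc.IH[OF le])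
  have arm: "arm A (Z((a,n):=x)) u t = arm A Z u t" by (simp add: arm_def IH)
  have cnt: "cnt A (Z((a,n):=x)) u t b = cnt A Z u t b" for b by (simp add: cnt_def IH)
  have ne: "(arm A Z u t, cnt A Z u t (arm A Z u t)) \<noteq> (a, n)"
  proof
    assume eq: "(arm A Z u t, cnt A Z u t (arm A Z u t)) = (a, n)"
    then have "cnt A Z u (Suc t) a = n + 1" using cnt_Suc[of A Z u t a] by auto
    then show False using Suc.prems by simp
  qed
  have z: "(Z((a,n):=x)) (arm A Z u t, cnt A Z u t (arm A Z u t)) = Z (arm A Z u t, cnt A Z u t (arm A Z u t))"
    by (rule fun_upd_other[OF ne])
  show ?case unfolding hist_Suc' IH arm cnt z ..
qed

lemma hist_local2:
  assumes "cnt A Z u t a \<le> n \<or> cnt A (Z((a,n):=x)) u t a \<le> n"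
  shows "hist A (Z((a,n):=x)) u t = hist A Z u t"
  using assms
proof
  assume "cnt A (Z((a,n):=x)) u t a \<le> n"
  from hist_local[OF this, of "Z (a,n)"] show ?thesis by simp
qed (rule hist_local)



definition obsS :: "('k \<times> real \<times> real) measure" where
  "obsS = count_space UNIV \<Otimes>\<^sub>M (borel \<Otimes>\<^sub>M borel)"

definition Zsp :: "('k \<times> nat \<Rightarrow> real \<times> real) measure" where
  "Zsp = PiM UNIV (\<lambda>_. borel \<Otimes>\<^sub>M borel)"

definition Om :: "(('k \<times> nat \<Rightarrow> real \<times> real) \<times> real) measure" where
  "Om = Zsp \<Otimes>\<^sub>M borel"

lemma obsM_eq: "obsM = PiM UNIV (\<lambda>_. obsS)"
  unfolding obsM_def obsS_def ..

lemma space_obsS[simp]: "space obsS = UNIV"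
  by (simp add: obsS_def space_pair_measure)

lemma list_fun_snoc: "list_fun (xs @ [y]) =
  (\<lambda>s. if s < length xs then list_fun xs s else if s = length xs then y else undefined)"
  by (auto simp: list_fun_def nth_append fun_eq_iff)

lemma arm_meas:
  assumes "valid_alg A"
    and "(\<lambda>\<omega>. list_fun (hist A (fst \<omega>) (snd \<omega>) t)) \<in> Om \<rightarrow>\<^sub>M obsM"
  shows "(\<lambda>\<omega>. arm A (fst \<omega>) (snd \<omega>) t) \<in> Om \<rightarrow>\<^sub>M count_space UNIV"
proof -
  have s: "(\<lambda>(u, h). samp A t u h) \<in> borel \<Otimes>\<^sub>M obsM \<rightarrow>\<^sub>M count_space UNIV"
    using assms(1) unfolding valid_alg_def by blast
  have p: "(\<lambda>\<omega>. (snd \<omega>, list_fun (hist A (fst \<omega>) (snd \<omega>) t))) \<in> Om \<rightarrow>\<^sub>M borel \<Otimes>\<^sub>M obsM"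
    using assms(2) unfolding Om_def by measurable
  have "(\<lambda>\<omega>. (\<lambda>(u, h). samp A t u h) (snd \<omega>, list_fun (hist A (fst \<omega>) (snd \<omega>) t))) \<in> Om \<rightarrow>\<^sub>M count_space UNIV"
    by (rule measurable_compose[OF p s])
  then show ?thesis by (simp add: arm_def)
qed

lemma hist_meas:
  fixes A :: "'k::finite alg"
  assumes "valid_alg A"
  shows "(\<lambda>\<omega>. list_fun (hist A (fst \<omega>) (snd \<omega>) t)) \<in> Om \<rightarrow>\<^sub>M obsM \<and>
         (\<forall>b. (\<lambda>\<omega>. cnt A (fst \<omega>) (snd \<omega>) t b) \<in> Om \<rightarrow>\<^sub>M count_space UNIV)"
proof (induction t)
  case 0
  have "(\<lambda>\<omega>. list_fun (hist A (fst \<omega>) (snd \<omega>) 0)) = (\<lambda>\<omega>. list_fun [])" by simp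
  moreover have "(\<lambda>\<omega>::(('k \<times> nat \<Rightarrow> real \<times> real) \<times> real). list_fun ([]::('k \<times> real \<times> real) list)) \<in> Om \<rightarrow>\<^sub>M obsM"
    by (rule measurable_const) (simp add: obsM_eq space_PiM)
  moreover have "(\<lambda>\<omega>. cnt A (fst \<omega>) (snd \<omega>) 0 b) = (\<lambda>\<omega>. 0)" for b by (simp add: cnt_def)
  ultimately show ?case by simp
next
  case (Suc t)
  note H = Suc.IH[THEN conjunct1] and C = Suc.IH[THEN conjunct2, rule_format]
  have Ar: "(\<lambda>\<omega>. arm A (fst \<omega>) (snd \<omega>) t) \<in> Om \<rightarrow>\<^sub>M count_space UNIV"
    by (rule arm_meas[OF assms H])
  have key: "(\<lambda>\<omega>. (arm A (fst \<omega>) (snd \<omega>) t, cnt A (fst \<omega>) (snd \<omega>) t (arm A (fst \<omega>) (snd \<omega>) t)))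
      \<in> Om \<rightarrow>\<^sub>M count_space UNIV"
  proof (rule measurable_compose_countable[where f="\<lambda>b \<omega>. (b, cnt A (fst \<omega>) (snd \<omega>) t b)", OF _ Ar])
    fix b :: 'k
    show "(\<lambda>\<omega>. (b, cnt A (fst \<omega>) (snd \<omega>) t b)) \<in> Om \<rightarrow>\<^sub>M count_space UNIV"
      by (rule measurable_compose[OF C[of b]]) simp
  qed
  have zc: "(\<lambda>\<omega>. fst \<omega> p) \<in> Om \<rightarrow>\<^sub>M borel \<Otimes>\<^sub>M borel" for p
    unfolding Om_def Zsp_def by measurable
  have newz: "(\<lambda>\<omega>. fst \<omega> (arm A (fst \<omega>) (snd \<omega>) t, cnt A (fst \<omega>) (snd \<omega>) t (arm A (fst \<omega>) (snd \<omega>) t)))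
      \<in> Om \<rightarrow>\<^sub>M borel \<Otimes>\<^sub>M borel"
    by (rule measurable_compose_countable[where f="\<lambda>p \<omega>. fst \<omega> p", OF zc key])
  have new: "(\<lambda>\<omega>. (arm A (fst \<omega>) (snd \<omega>) t, fst \<omega> (arm A (fst \<omega>) (snd \<omega>) t, cnt A (fst \<omega>) (snd \<omega>) t (arm A (fst \<omega>) (snd \<omega>) t))))
      \<in> Om \<rightarrow>\<^sub>M obsS"
    unfolding obsS_def by (rule measurable_Pair[OF Ar newz])
  have eq: "(\<lambda>\<omega>. list_fun (hist A (fst \<omega>) (snd \<omega>) (Suc t))) = (\<lambda>\<omega> s.
      if s < t then list_fun (hist A (fst \<omega>) (snd \<omega>) t) s
      else if s = t then (arm A (fst \<omega>) (snd \<omega>) t, fst \<omega> (arm A (fst \<omega>) (snd \<omega>) t, cnt A (fst \<omega>) (snd \<omega>) t (arm A (fst \<omega>) (snd \<omega>) t)))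
      else undefined)"
    by (intro ext) (simp add: hist_Suc' list_fun_snoc)
  have comp: "(\<lambda>\<omega>. list_fun (hist A (fst \<omega>) (snd \<omega>) t) s) \<in> Om \<rightarrow>\<^sub>M obsS" for s
    by (rule measurable_compose[OF H]) (simp add: obsM_eq)
  have 1: "(\<lambda>\<omega>. list_fun (hist A (fst \<omega>) (snd \<omega>) (Suc t))) \<in> Om \<rightarrow>\<^sub>M obsM"
    unfolding eq obsM_eq
    by (rule measurable_PiM_single') (auto intro!: measurable_If comp new simp: space_PiM)
  have 2: "(\<lambda>\<omega>. cnt A (fst \<omega>) (snd \<omega>) (Suc t) b) \<in> Om \<rightarrow>\<^sub>M count_space UNIV" for b
  proof -
    have "(\<lambda>\<omega>. cnt A (fst \<omega>) (snd \<omega>) t b + (if arm A (fst \<omega>) (snd \<omega>) t = b then 1 else 0)) \<in> Om \<rightarrow>\<^sub>M count_space UNIV"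
    proof (rule measurable_compose_countable[where f="\<lambda>n \<omega>. n + (if arm A (fst \<omega>) (snd \<omega>) t = b then 1 else 0)", OF _ C[of b]])
      fix n :: nat
      show "(\<lambda>\<omega>. n + (if arm A (fst \<omega>) (snd \<omega>) t = b then 1 else 0)) \<in> Om \<rightarrow>\<^sub>M count_space UNIV"
        by (rule measurable_compose[OF Ar]) simp
    qed
    then show ?thesis by (simp add: cnt_Suc)
  qed
  show ?case using 1 2 by blast
qed



lemma pair_sf: "prob_space M1 \<Longrightarrow> prob_space M2 \<Longrightarrow> pair_sigma_finite M1 M2"
  by (simp add: pair_sigma_finite.intro prob_space_imp_sigma_finite)

lemma split_PiM:
  fixes M :: "'i \<Rightarrow> 'a measure"
  assumes P: "\<And>j. prob_space (M j)" and f: "f \<in> borel_measurable (PiM UNIV M)"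
  shows "(\<integral>\<^sup>+Z. f Z \<partial>PiM UNIV M) = (\<integral>\<^sup>+X. (\<integral>\<^sup>+x. f (X(i:=x)) \<partial>M i) \<partial>PiM (UNIV - {i}) M)"
proof -
  have U: "insert i (UNIV - {i}) = UNIV" by auto
  have d: "distr (M i \<Otimes>\<^sub>M PiM (UNIV-{i}) M) (PiM UNIV M) (\<lambda>(x,X). X(i:=x)) = PiM UNIV M"
    using distr_pair_PiM_eq_PiM[of "UNIV - {i}" M i] P unfolding U by auto
  have T: "(\<lambda>(x,X). X(i:=x)) \<in> M i \<Otimes>\<^sub>M PiM (UNIV-{i}) M \<rightarrow>\<^sub>M PiM UNIV M"
  proof -
    have "(\<lambda>p. (snd p)(i := fst p)) \<in> M i \<Otimes>\<^sub>M PiM (UNIV-{i}) M \<rightarrow>\<^sub>M PiM UNIV M"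
      by (rule measurable_fun_upd[where J="UNIV - {i}"]) auto
    then show ?thesis by (simp add: case_prod_beta')
  qed
  have "(\<integral>\<^sup>+Z. f Z \<partial>PiM UNIV M) = (\<integral>\<^sup>+Z. f Z \<partial>distr (M i \<Otimes>\<^sub>M PiM (UNIV-{i}) M) (PiM UNIV M) (\<lambda>(x,X). X(i:=x)))"
    by (simp add: d)
  also have "\<dots> = (\<integral>\<^sup>+p. f ((\<lambda>(x,X). X(i:=x)) p) \<partial>(M i \<Otimes>\<^sub>M PiM (UNIV-{i}) M))"
    by (rule nn_integral_distr[OF T]) (simp add: f)
  also have "\<dots> = (\<integral>\<^sup>+X. (\<integral>\<^sup>+x. f (X(i:=x)) \<partial>M i) \<partial>PiM (UNIV - {i}) M)"
  proof -
    have ps: "pair_sigma_finite (M i) (PiM (UNIV-{i}) M)"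
      using P by (intro pair_sf prob_space_PiM) auto
    have m: "(\<lambda>p. f ((\<lambda>(x,X). X(i:=x)) p)) \<in> borel_measurable (M i \<Otimes>\<^sub>M PiM (UNIV-{i}) M)"
      by (rule measurable_compose[OF T f])
    show ?thesis using pair_sigma_finite.nn_integral_snd[OF ps m] by simp
  qed
  finally show ?thesis .
qed

lemma resample:
  fixes M :: "'i \<Rightarrow> 'a measure"
  assumes P: "\<And>j. prob_space (M j)" and f: "f \<in> borel_measurable (PiM UNIV M)"
  shows "(\<integral>\<^sup>+Z. f Z \<partial>PiM UNIV M) = (\<integral>\<^sup>+Z. (\<integral>\<^sup>+x. f (Z(i:=x)) \<partial>M i) \<partial>PiM UNIV M)"
proof -
  have T: "(\<lambda>p. (fst p)(i := snd p)) \<in> PiM UNIV M \<Otimes>\<^sub>M M i \<rightarrow>\<^sub>M PiM UNIV M"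
    by (rule measurable_fun_upd[where J=UNIV]) auto
  have sf: "sigma_finite_measure (M i)" using P by (simp add: prob_space_imp_sigma_finite)
  have g: "(\<lambda>Z. \<integral>\<^sup>+x. f (Z(i:=x)) \<partial>M i) \<in> borel_measurable (PiM UNIV M)"
    using sigma_finite_measure.borel_measurable_nn_integral_fst[OF sf measurable_compose[OF T f]]
    by simp
  have "(\<integral>\<^sup>+Z. (\<integral>\<^sup>+x. f (Z(i:=x)) \<partial>M i) \<partial>PiM UNIV M)
      = (\<integral>\<^sup>+X. (\<integral>\<^sup>+y. (\<integral>\<^sup>+x. f ((X(i:=y))(i:=x)) \<partial>M i) \<partial>M i) \<partial>PiM (UNIV - {i}) M)"
    by (rule split_PiM[OF P g])
  also have "\<dots> = (\<integral>\<^sup>+X. (\<integral>\<^sup>+y. (\<integral>\<^sup>+x. f (X(i:=x)) \<partial>M i) \<partial>M i) \<partial>PiM (UNIV - {i}) M)"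
    by simp
  also have "\<dots> = (\<integral>\<^sup>+X. (\<integral>\<^sup>+x. f (X(i:=x)) \<partial>M i) \<partial>PiM (UNIV - {i}) M)"
    using prob_space.emeasure_space_1[OF P[of i]] by (simp add: nn_integral_const)
  also have "\<dots> = (\<integral>\<^sup>+Z. f Z \<partial>PiM UNIV M)"
    by (rule split_PiM[OF P f, symmetric])
  finally show ?thesis by simp
qed



lemma stp_meas:
  fixes A :: "'k::finite alg"
  assumes "valid_alg A"
  shows "(\<lambda>\<omega>. stp A s (snd \<omega>) (list_fun (hist A (fst \<omega>) (snd \<omega>) t))) \<in> Om \<rightarrow>\<^sub>M count_space UNIV"
proof -
  have s: "(\<lambda>(u, h). stp A s u h) \<in> borel \<Otimes>\<^sub>M obsM \<rightarrow>\<^sub>M count_space UNIV"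
    using assms(1) unfolding valid_alg_def by blast
  have p: "(\<lambda>\<omega>. (snd \<omega>, list_fun (hist A (fst \<omega>) (snd \<omega>) t))) \<in> Om \<rightarrow>\<^sub>M borel \<Otimes>\<^sub>M obsM"
  proof (rule measurable_Pair)
    show "(\<lambda>\<omega>. snd \<omega>) \<in> Om \<rightarrow>\<^sub>M borel" unfolding Om_def by simp
  qed (rule hist_meas[OF assms, THEN conjunct1])
  show ?thesis using measurable_compose[OF p s] by simp
qed

lemma dec_meas:
  fixes A :: "'k::finite alg"
  assumes "valid_alg A"
  shows "(\<lambda>\<omega>. dec A s (snd \<omega>) (list_fun (hist A (fst \<omega>) (snd \<omega>) t))) \<in> Om \<rightarrow>\<^sub>M count_space UNIV"
proof -
  have s: "(\<lambda>(u, h). dec A s u h) \<in> borel \<Otimes>\<^sub>M obsM \<rightarrow>\<^sub>M count_space UNIV"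
    using assms(1) unfolding valid_alg_def by blast
  have p: "(\<lambda>\<omega>. (snd \<omega>, list_fun (hist A (fst \<omega>) (snd \<omega>) t))) \<in> Om \<rightarrow>\<^sub>M borel \<Otimes>\<^sub>M obsM"
  proof (rule measurable_Pair)
    show "(\<lambda>\<omega>. snd \<omega>) \<in> Om \<rightarrow>\<^sub>M borel" unfolding Om_def by simp
  qed (rule hist_meas[OF assms, THEN conjunct1])
  show ?thesis using measurable_compose[OF p s] by simp
qed

locale bmodel =
  fixes A :: "'k::finite alg" and M :: "'k \<times> nat \<Rightarrow> (real \<times> real) measure" and u :: real
  assumes valid: "valid_alg A" and probM: "\<And>p. prob_space (M p)"
    and setsM: "\<And>p. sets (M p) = sets (borel \<Otimes>\<^sub>M borel)"
begin

abbreviation "PM \<equiv> PiM UNIV M"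

lemma sets_PM: "sets PM = sets Zsp"
  unfolding Zsp_def by (rule sets_PiM_cong) (auto simp: setsM)

lemma fixu: "(\<lambda>Z. (Z, u)) \<in> PM \<rightarrow>\<^sub>M Om"
proof -
  have "(\<lambda>Z. (Z, u)) \<in> Zsp \<rightarrow>\<^sub>M Om" unfolding Om_def by measurable
  then show ?thesis using measurable_cong_sets[OF sets_PM refl] by blast
qed

lemma hist_u[measurable]: "(\<lambda>Z. list_fun (hist A Z u t)) \<in> PM \<rightarrow>\<^sub>M obsM"
  using measurable_compose[OF fixu hist_meas[OF valid, THEN conjunct1]] by simp

lemma cnt_u[measurable]: "(\<lambda>Z. cnt A Z u t b) \<in> PM \<rightarrow>\<^sub>M count_space UNIV"
  using measurable_compose[OF fixu hist_meas[OF valid, THEN conjunct2, rule_format]] by simp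

lemma arm_u[measurable]: "(\<lambda>Z. arm A Z u t) \<in> PM \<rightarrow>\<^sub>M count_space UNIV"
  using measurable_compose[OF fixu arm_meas[OF valid hist_meas[OF valid, THEN conjunct1]]] by simp

lemma stp_u[measurable]: "Measurable.pred PM (\<lambda>Z. stp A s u (list_fun (hist A Z u t)))"
  using measurable_compose[OF fixu stp_meas[OF valid]] by simp

lemma dec_u[measurable]: "(\<lambda>Z. dec A s u (list_fun (hist A Z u t))) \<in> PM \<rightarrow>\<^sub>M count_space UNIV"
  using measurable_compose[OF fixu dec_meas[OF valid]] by simp

lemma comp_u[measurable]: "(\<lambda>Z. Z p) \<in> PM \<rightarrow>\<^sub>M borel \<Otimes>\<^sub>M borel"
proof -
  have "(\<lambda>Z. Z p) \<in> PM \<rightarrow>\<^sub>M M p" by simp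
  then show ?thesis using measurable_cong_sets[OF refl setsM] by blast
qed

lemma test: "Measurable.pred PM (\<lambda>Z. arm A Z u t = a \<and> cnt A Z u t a = n \<and> (\<forall>s'\<le>t. \<not> stp A s' u (list_fun (hist A Z u t))))"
  by measurable

end


lemma inv_hist:
  fixes F :: "('k \<times> real \<times> real) list \<Rightarrow> 'b::zero"
  shows "(if cnt A (Z((a,n):=x)) u s a = n then F (hist A (Z((a,n):=x)) u s) else 0) =
         (if cnt A Z u s a = n then F (hist A Z u s) else 0)"
proof (cases "cnt A Z u s a = n")
  case True
  then have "hist A (Z((a,n):=x)) u s = hist A Z u s" by (intro hist_local) simp
  then show ?thesis by (simp add: cnt_def)
next
  case False
  have "cnt A (Z((a,n):=x)) u s a \<noteq> n"
  proof
    assume h: "cnt A (Z((a,n):=x)) u s a = n"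
    then have "hist A (Z((a,n):=x)) u s = hist A Z u s" by (intro hist_local2) simp
    then show False using h False by (simp add: cnt_def)
  qed
  then show ?thesis using False by simp
qed

context bmodel begin

definition C :: "nat \<Rightarrow> ('k \<times> nat \<Rightarrow> real \<times> real) \<Rightarrow> bool" where
  "C s Z \<longleftrightarrow> (\<forall>s'\<le>s. \<not> stp A s' u (list_fun (hist A Z u s)))"

lemma C_u[measurable]: "Measurable.pred PM (C s)"
  unfolding C_def by measurable

lemma wald_s:
  assumes Ma: "\<And>a n. M (a,n) = Ma a"
    and phi[measurable]: "\<And>a. phi a \<in> borel_measurable (borel \<Otimes>\<^sub>M borel)"
  shows "(\<integral>\<^sup>+Z. (if C s Z then phi (arm A Z u s) (snd (obsf A Z u s)) else 0) \<partial>PM)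
       = (\<Sum>a\<in>UNIV. (\<integral>\<^sup>+x. phi a x \<partial>Ma a) * (\<integral>\<^sup>+Z. (if C s Z \<and> arm A Z u s = a then 1 else 0) \<partial>PM))"
proof -
  define G where "G a n Z = (if cnt A Z u s a = n then (if C s Z \<and> arm A Z u s = a then phi a (Z (a,n)) else 0) else 0)" for a n Z
  define I where "I a n Z = (if cnt A Z u s a = n then (if C s Z \<and> arm A Z u s = a then 1 else 0) else (0::ennreal))" for a n Z
  have Gm[measurable]: "G a n \<in> borel_measurable PM" for a n unfolding G_def by measurable
  have Im[measurable]: "I a n \<in> borel_measurable PM" for a n unfolding I_def by measurable
  have pw: "(if C s Z then phi (arm A Z u s) (snd (obsf A Z u s)) else 0) = (\<Sum>a\<in>UNIV. \<Sum>n\<in>{..s}. G a n Z)" for Z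
  proof -
    have "(\<Sum>n\<in>{..s}. G a n Z) = (if C s Z \<and> arm A Z u s = a then phi a (Z (a, cnt A Z u s a)) else 0)" for a
      unfolding G_def using cnt_le[of A Z u s a] by (simp add: sum.delta)
    then have "(\<Sum>a\<in>UNIV. \<Sum>n\<in>{..s}. G a n Z) = (\<Sum>a\<in>UNIV. if arm A Z u s = a then (if C s Z then phi a (Z (a, cnt A Z u s a)) else 0) else 0)"
      by (intro sum.cong) auto
    also have "\<dots> = (if C s Z then phi (arm A Z u s) (Z (arm A Z u s, cnt A Z u s (arm A Z u s))) else 0)"
      by (simp add: sum.delta)
    finally show ?thesis by (simp add: obsf_eq)
  qed
  have pw2: "(if C s Z \<and> arm A Z u s = a then 1 else 0) = (\<Sum>n\<in>{..s}. I a n Z)" for a Z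
    unfolding I_def using cnt_le[of A Z u s a] by (simp add: sum.delta)
  have trm: "(\<integral>\<^sup>+Z. G a n Z \<partial>PM) = (\<integral>\<^sup>+x. phi a x \<partial>Ma a) * (\<integral>\<^sup>+Z. I a n Z \<partial>PM)" for a n
  proof -
    have "(\<integral>\<^sup>+Z. G a n Z \<partial>PM) = (\<integral>\<^sup>+Z. (\<integral>\<^sup>+x. G a n (Z((a,n):=x)) \<partial>M (a,n)) \<partial>PM)"
      by (rule resample[OF probM Gm])
    also have "\<dots> = (\<integral>\<^sup>+Z. (\<integral>\<^sup>+x. I a n Z * phi a x \<partial>Ma a) \<partial>PM)"
    proof -
      have pt: "G a n (Z((a,n):=x)) = I a n Z * phi a x" for Z x
      proof -
      have "G a n (Z((a,n):=x)) = (if cnt A (Z((a,n):=x)) u s a = n then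
          (\<lambda>h. if (\<forall>s'\<le>s. \<not> stp A s' u (list_fun h)) \<and> samp A s u (list_fun h) = a then phi a x else 0)
            (hist A (Z((a,n):=x)) u s) else 0)"
        unfolding G_def C_def arm_def by auto
      also have "\<dots> = (if cnt A Z u s a = n then
          (\<lambda>h. if (\<forall>s'\<le>s. \<not> stp A s' u (list_fun h)) \<and> samp A s u (list_fun h) = a then phi a x else 0)
            (hist A Z u s) else 0)"
        by (rule inv_hist)
      also have "\<dots> = I a n Z * phi a x"
        unfolding I_def C_def arm_def by auto
      finally show ?thesis .
      qed
      show ?thesis by (simp only: pt Ma)
    qed
    also have "\<dots> = (\<integral>\<^sup>+Z. I a n Z * (\<integral>\<^sup>+x. phi a x \<partial>Ma a) \<partial>PM)"
    proof -
      have "phi a \<in> borel_measurable (Ma a)"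
        using measurable_cong_sets[OF setsM[of "(a,0)", unfolded Ma] refl] phi by blast
      then show ?thesis by (simp add: nn_integral_cmult)
    qed
    also have "\<dots> = (\<integral>\<^sup>+x. phi a x \<partial>Ma a) * (\<integral>\<^sup>+Z. I a n Z \<partial>PM)"
      by (subst nn_integral_multc) (auto simp: mult.commute)
    finally show ?thesis .
  qed
  have "(\<integral>\<^sup>+Z. (if C s Z then phi (arm A Z u s) (snd (obsf A Z u s)) else 0) \<partial>PM)
      = (\<integral>\<^sup>+Z. (\<Sum>a\<in>UNIV. \<Sum>n\<in>{..s}. G a n Z) \<partial>PM)" by (simp add: pw)
  also have "\<dots> = (\<Sum>a\<in>UNIV. \<Sum>n\<in>{..s}. \<integral>\<^sup>+Z. G a n Z \<partial>PM)"
    by (simp add: nn_integral_sum)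
  also have "\<dots> = (\<Sum>a\<in>UNIV. (\<integral>\<^sup>+x. phi a x \<partial>Ma a) * (\<Sum>n\<in>{..s}. \<integral>\<^sup>+Z. I a n Z \<partial>PM))"
    by (simp add: trm sum_distrib_left)
  also have "\<dots> = (\<Sum>a\<in>UNIV. (\<integral>\<^sup>+x. phi a x \<partial>Ma a) * (\<integral>\<^sup>+Z. (if C s Z \<and> arm A Z u s = a then 1 else 0) \<partial>PM))"
    by (simp add: pw2 nn_integral_sum)
  finally show ?thesis .
qed

end


declare hist.simps(2)[simp del]

definition Lam :: "('k \<Rightarrow> real \<times> real \<Rightarrow> ennreal) \<Rightarrow> ('k \<times> real \<times> real) list \<Rightarrow> ennreal" where
  "Lam rho h = prod_list (map (\<lambda>ob. rho (fst ob) (snd ob)) h)"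

lemma Lam_snoc: "Lam rho (h @ [(a,x)]) = Lam rho h * rho a x"
  by (simp add: Lam_def)

lemma G_upd: "(if cnt A Z u t a = n \<and> arm A Z u t = a then W (hist A Z u (Suc t)) else 0) =
  (if cnt A Z u t a = n then (if samp A t u (list_fun (hist A Z u t)) = a then W (hist A Z u t @ [(a, Z (a,n))]) else 0) else (0::ennreal))"
  by (auto simp: hist_Suc' arm_def)

locale cm = P: bmodel A Mp u + Q: bmodel A Mq u for A :: "'k::finite alg" and Mp Mq u +
  fixes rho :: "'k \<Rightarrow> real \<times> real \<Rightarrow> ennreal"
  assumes Mq: "\<And>p. Mq p = density (Mp p) (rho (fst p))"
    and rhom[measurable]: "\<And>a. rho a \<in> borel_measurable (borel \<Otimes>\<^sub>M borel)"
begin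

lemma rho_Mp: "rho a \<in> borel_measurable (Mp p)"
  using rhom measurable_cong_sets[OF P.setsM refl] by blast

lemma sets_PQ: "sets Q.PM = sets P.PM"
  using P.sets_PM Q.sets_PM by simp

lemma rho_obs[measurable]: "(\<lambda>ob. rho (fst ob) (snd ob)) \<in> borel_measurable obsS"
proof -
  have "(\<lambda>ob. rho (fst ob) (snd ob)) \<in> borel_measurable (count_space UNIV \<Otimes>\<^sub>M (borel \<Otimes>\<^sub>M borel))"
    by (rule measurable_compose_countable[where f="\<lambda>a ob. rho a (snd ob)" and g=fst]) auto
  then show ?thesis by (simp add: obsS_def)
qed

lemma Lam_meas[measurable]: "(\<lambda>Z. Lam rho (hist A Z u t)) \<in> borel_measurable P.PM"
proof (induction t)
  case 0 then show ?case by (simp add: Lam_def)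
next
  case (Suc t)
  have o: "(\<lambda>Z. list_fun (hist A Z u (Suc t)) t) \<in> P.PM \<rightarrow>\<^sub>M obsS"
    by (rule measurable_compose[OF P.hist_u]) (simp add: obsM_eq)
  have "Lam rho (hist A Z u (Suc t)) = Lam rho (hist A Z u t) * (\<lambda>ob. rho (fst ob) (snd ob)) (list_fun (hist A Z u (Suc t)) t)" for Z
    by (simp add: hist_Suc' Lam_def list_fun_snoc)
  then show ?case using Suc measurable_compose[OF o rho_obs] by simp
qed

lemma CM:
  "\<And>W. (\<lambda>Z. W (hist A Z u t)) \<in> borel_measurable P.PM \<Longrightarrow>
   (\<integral>\<^sup>+Z. W (hist A Z u t) \<partial>Q.PM) = (\<integral>\<^sup>+Z. W (hist A Z u t) * Lam rho (hist A Z u t) \<partial>P.PM)"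
proof (induction t)
  case 0
  have "prob_space P.PM" "prob_space Q.PM" using P.probM Q.probM by (auto intro!: prob_space_PiM)
  then show ?case by (simp add: Lam_def nn_integral_const prob_space.emeasure_space_1)
next
  case (Suc t W)
  have Wm[measurable]: "(\<lambda>Z. W (hist A Z u (Suc t))) \<in> borel_measurable P.PM" by fact
  have WmQ: "(\<lambda>Z. W (hist A Z u (Suc t))) \<in> borel_measurable Q.PM"
    using Wm measurable_cong_sets[OF sets_PQ refl] by blast
  define G where "G a n Z = (if cnt A Z u t a = n \<and> arm A Z u t = a then W (hist A Z u (Suc t)) else 0)" for a n Z
  define G' where "G' a n Z = (if cnt A Z u t a = n \<and> arm A Z u t = a then W (hist A Z u (Suc t)) * Lam rho (hist A Z u (Suc t)) else 0)" for a n Z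
  have Gm[measurable]: "G a n \<in> borel_measurable P.PM" for a n unfolding G_def by measurable
  have GmQ: "G a n \<in> borel_measurable Q.PM" for a n using Gm measurable_cong_sets[OF sets_PQ refl] by blast
  have G'm[measurable]: "G' a n \<in> borel_measurable P.PM" for a n unfolding G'_def by measurable
  have pwG: "W (hist A Z u (Suc t)) = (\<Sum>a\<in>UNIV. \<Sum>n\<in>{..t}. G a n Z)" for Z
  proof -
    have "(\<Sum>n\<in>{..t}. G a n Z) = (if arm A Z u t = a then W (hist A Z u (Suc t)) else 0)" for a
      unfolding G_def using cnt_le[of A Z u t a] by (simp add: sum.delta)
    then show ?thesis by (simp add: sum.delta)
  qed
  have pwG': "W (hist A Z u (Suc t)) * Lam rho (hist A Z u (Suc t)) = (\<Sum>a\<in>UNIV. \<Sum>n\<in>{..t}. G' a n Z)" for Z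
  proof -
    have "(\<Sum>n\<in>{..t}. G' a n Z) = (if arm A Z u t = a then W (hist A Z u (Suc t)) * Lam rho (hist A Z u (Suc t)) else 0)" for a
      unfolding G'_def using cnt_le[of A Z u t a] by (simp add: sum.delta)
    then show ?thesis by (simp add: sum.delta)
  qed
  have step: "(\<integral>\<^sup>+Z. G a n Z \<partial>Q.PM) = (\<integral>\<^sup>+Z. G' a n Z \<partial>P.PM)" for a n
  proof -
    define V where "V Z = (\<integral>\<^sup>+x. G a n (Z((a,n):=x)) \<partial>Mq (a,n))" for Z
    define F where "F x h = (if samp A t u (list_fun h) = a then W (h @ [(a, x)]) else 0)" for x h
    define W' where "W' h = (if length (filter (\<lambda>ob. fst ob = a) h) = n then
        (\<integral>\<^sup>+x. F x h \<partial>Mq (a,n)) else 0)" for h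
    have Gupd: "G a n (Z((a,n):=x)) = (if cnt A Z u t a = n then F x (hist A Z u t) else 0)" for Z x
    proof -
      have "G a n (Z((a,n):=x)) = (if cnt A (Z((a,n):=x)) u t a = n then F x (hist A (Z((a,n):=x)) u t) else 0)"
        unfolding G_def G_upd F_def by simp
      also have "\<dots> = (if cnt A Z u t a = n then F x (hist A Z u t) else 0)"
        by (rule inv_hist)
      finally show ?thesis .
    qed
    have G'upd: "G' a n (Z((a,n):=x)) = (if cnt A Z u t a = n then F x (hist A Z u t) * Lam rho (hist A Z u t) * rho a x else 0)" for Z x
    proof -
      have "G' a n (Z((a,n):=x)) = (if cnt A (Z((a,n):=x)) u t a = n then (\<lambda>h. F x h * Lam rho h * rho a x) (hist A (Z((a,n):=x)) u t) else 0)"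
        unfolding G'_def G_upd[where W="\<lambda>h. W h * Lam rho h"] F_def by (simp add: Lam_snoc mult.assoc)
      also have "\<dots> = (if cnt A Z u t a = n then (\<lambda>h. F x h * Lam rho h * rho a x) (hist A Z u t) else 0)"
        by (rule inv_hist)
      finally show ?thesis by simp
    qed
    have T: "(\<lambda>p. (fst p)((a,n) := snd p)) \<in> P.PM \<Otimes>\<^sub>M Mp (a,n) \<rightarrow>\<^sub>M P.PM"
      by (rule measurable_fun_upd[where J=UNIV]) auto
    have TQ: "(\<lambda>p. (fst p)((a,n) := snd p)) \<in> Q.PM \<Otimes>\<^sub>M Mq (a,n) \<rightarrow>\<^sub>M Q.PM"
      by (rule measurable_fun_upd[where J=UNIV]) auto
    have sfq: "sigma_finite_measure (Mq (a,n))" using Q.probM by (simp add: prob_space_imp_sigma_finite)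
    have VmQ: "V \<in> borel_measurable Q.PM"
      unfolding V_def using sigma_finite_measure.borel_measurable_nn_integral_fst[OF sfq measurable_compose[OF TQ GmQ]]
      by simp
    have Vm: "V \<in> borel_measurable P.PM" using VmQ measurable_cong_sets[OF sets_PQ refl] by blast
    have VW': "V Z = W' (hist A Z u t)" for Z
      unfolding V_def W'_def Gupd by (simp add: cnt_def)
    have W'm: "(\<lambda>Z. W' (hist A Z u t)) \<in> borel_measurable P.PM"
      using Vm by (simp add: VW'[symmetric])
    have sec: "(\<lambda>x. G a n (Z((a,n):=x))) \<in> borel_measurable (Mp (a,n))" if "Z \<in> space P.PM" for Z
    proof -
      have "(\<lambda>x. Z((a,n):=x)) \<in> Mp (a,n) \<rightarrow>\<^sub>M P.PM"
        using that by (intro measurable_fun_upd[where J=UNIV]) auto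
      then show ?thesis using measurable_compose Gm by blast
    qed
    have "(\<integral>\<^sup>+Z. G a n Z \<partial>Q.PM) = (\<integral>\<^sup>+Z. V Z \<partial>Q.PM)"
      unfolding V_def by (rule resample[OF Q.probM GmQ])
    also have "\<dots> = (\<integral>\<^sup>+Z. W' (hist A Z u t) \<partial>Q.PM)" by (simp add: VW')
    also have "\<dots> = (\<integral>\<^sup>+Z. W' (hist A Z u t) * Lam rho (hist A Z u t) \<partial>P.PM)"
      by (rule Suc.IH[OF W'm])
    also have "\<dots> = (\<integral>\<^sup>+Z. V Z * Lam rho (hist A Z u t) \<partial>P.PM)" by (simp add: VW')
    also have "\<dots> = (\<integral>\<^sup>+Z. (\<integral>\<^sup>+x. G' a n (Z((a,n):=x)) \<partial>Mp (a,n)) \<partial>P.PM)"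
    proof (rule nn_integral_cong)
      fix Z assume Z: "Z \<in> space P.PM"
      have "V Z = (\<integral>\<^sup>+x. rho a x * G a n (Z((a,n):=x)) \<partial>Mp (a,n))"
        unfolding V_def Mq using sec[OF Z] by (subst nn_integral_density) (auto simp: rho_Mp)
      then have "V Z * Lam rho (hist A Z u t) = (\<integral>\<^sup>+x. rho a x * G a n (Z((a,n):=x)) * Lam rho (hist A Z u t) \<partial>Mp (a,n))"
        using sec[OF Z] rho_Mp by (subst nn_integral_multc) auto
      also have "\<dots> = (\<integral>\<^sup>+x. G' a n (Z((a,n):=x)) \<partial>Mp (a,n))"
        by (intro nn_integral_cong) (simp add: Gupd G'upd mult_ac)
      finally show "V Z * Lam rho (hist A Z u t) = (\<integral>\<^sup>+x. G' a n (Z((a,n):=x)) \<partial>Mp (a,n))" .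
    qed
    also have "\<dots> = (\<integral>\<^sup>+Z. G' a n Z \<partial>P.PM)"
      by (rule resample[OF P.probM G'm, symmetric])
    finally show ?thesis .
  qed
  have "(\<integral>\<^sup>+Z. W (hist A Z u (Suc t)) \<partial>Q.PM) = (\<Sum>a\<in>UNIV. \<Sum>n\<in>{..t}. \<integral>\<^sup>+Z. G a n Z \<partial>Q.PM)"
    by (simp add: pwG nn_integral_sum GmQ borel_measurable_sum)
  also have "\<dots> = (\<Sum>a\<in>UNIV. \<Sum>n\<in>{..t}. \<integral>\<^sup>+Z. G' a n Z \<partial>P.PM)" by (simp add: step)
  also have "\<dots> = (\<integral>\<^sup>+Z. W (hist A Z u (Suc t)) * Lam rho (hist A Z u (Suc t)) \<partial>P.PM)"
    by (simp add: pwG' nn_integral_sum)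
  finally show ?case .
qed

end


lemma suminf_single_enn:
  assumes "\<And>t. t \<noteq> tz \<Longrightarrow> f t = (0::ennreal)"
  shows "(\<Sum>t. f t) = f tz"
proof -
  have "f = (\<lambda>t. if t = tz then f tz else 0)" using assms by auto
  then show ?thesis using sums_unique[OF sums_single[of tz "\<lambda>_. f tz"]] by metis
qed

lemma D_iff:
  assumes "valid_alg A"
  shows "(stp A t u (list_fun (hist A Z u t)) \<and> (\<forall>s<t. \<not> stp A s u (list_fun (hist A Z u t)))) \<longleftrightarrow>
         (stops A Z u \<and> tau A Z u = t)"
proof -
  have e: "(stp A t u (list_fun (hist A Z u t)) \<and> (\<forall>s<t. \<not> stp A s u (list_fun (hist A Z u t)))) \<longleftrightarrow>
        (stp A t u (obsf A Z u) \<and> (\<forall>s<t. \<not> stp A s u (obsf A Z u)))"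
    using valid_stp[OF assms] by (metis less_imp_le order_refl)
  show ?thesis unfolding e stops_def tau_def
  proof safe
    assume "stp A t u (obsf A Z u)" "\<forall>s<t. \<not> stp A s u (obsf A Z u)"
    then show "(LEAST t. stp A t u (obsf A Z u)) = t"
      by (intro Least_equality) (auto simp: not_less[symmetric])
  next
    fix t' assume "stp A t' u (obsf A Z u)"
    then show "stp A (LEAST t. stp A t u (obsf A Z u)) u (obsf A Z u)" by (rule LeastI)
  next
    fix t' s assume "stp A t' u (obsf A Z u)" "s < (LEAST t. stp A t u (obsf A Z u))" "stp A s u (obsf A Z u)"
    then show False using not_less_Least by blast
  qed blast
qed

context cm begin

lemma CM_event:
  "(\<integral>\<^sup>+Z. (if stops A Z u \<and> phi (decision A Z u) then Lam rho (hist A Z u (tau A Z u)) else 0) \<partial>P.PM)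
   = (\<integral>\<^sup>+Z. (if stops A Z u \<and> phi (decision A Z u) then 1 else 0) \<partial>Q.PM)"
proof -
  define D where "D t h \<longleftrightarrow> stp A t u (list_fun h) \<and> (\<forall>s<t. \<not> stp A s u (list_fun h)) \<and> phi (dec A t u (list_fun h))" for t h
  have Dd: "D t (hist A Z u t) \<longleftrightarrow> stops A Z u \<and> tau A Z u = t \<and> phi (decision A Z u)" for t Z
  proof -
    have "dec A t u (list_fun (hist A Z u t)) = dec A t u (obsf A Z u)"
      using valid_dec[OF P.valid, of t t u Z] by simp
    moreover have "(stp A t u (list_fun (hist A Z u t)) \<and> (\<forall>s<t. \<not> stp A s u (list_fun (hist A Z u t)))) \<longleftrightarrow>
         (stops A Z u \<and> tau A Z u = t)" by (rule D_iff[OF P.valid])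
    ultimately show ?thesis unfolding D_def by (auto simp: decision_def)
  qed
  have sum_eq: "(if stops A Z u \<and> phi (decision A Z u) then X (hist A Z u (tau A Z u)) else 0)
      = (\<Sum>t. if D t (hist A Z u t) then X (hist A Z u t) else (0::ennreal))" for X Z
  proof (cases "stops A Z u \<and> phi (decision A Z u)")
    case True
    then show ?thesis by (subst suminf_single_enn[where tz="tau A Z u"]) (auto simp: Dd)
  next
    case False
    then have "(if D t (hist A Z u t) then X (hist A Z u t) else (0::ennreal)) = 0" for t by (auto simp: Dd)
    then show ?thesis using False by auto
  qed
  have Dm[measurable]: "Measurable.pred P.PM (\<lambda>Z. D t (hist A Z u t))" for t
    unfolding D_def by measurable
  have DmQ: "Measurable.pred Q.PM (\<lambda>Z. D t (hist A Z u t))" for t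
    using Dm measurable_cong_sets[OF sets_PQ refl] by blast
  have "(\<integral>\<^sup>+Z. (if stops A Z u \<and> phi (decision A Z u) then Lam rho (hist A Z u (tau A Z u)) else 0) \<partial>P.PM)
     = (\<Sum>t. \<integral>\<^sup>+Z. (if D t (hist A Z u t) then Lam rho (hist A Z u t) else 0) \<partial>P.PM)"
    unfolding sum_eq by (rule nn_integral_suminf) measurable
  also have "\<dots> = (\<Sum>t. \<integral>\<^sup>+Z. (if D t (hist A Z u t) then 1 else 0) \<partial>Q.PM)"
  proof (intro suminf_cong)
    fix t
    have e1: "(\<integral>\<^sup>+Z. (if D t (hist A Z u t) then 1 else 0) \<partial>Q.PM) =
      (\<integral>\<^sup>+Z. (if D t (hist A Z u t) then 1 else 0) * Lam rho (hist A Z u t) \<partial>P.PM)"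
      by (rule CM[where W="\<lambda>h. if D t h then 1 else 0"]) measurable
    have e2: "(\<lambda>Z. (if D t (hist A Z u t) then 1 else 0) * Lam rho (hist A Z u t)) = (\<lambda>Z. if D t (hist A Z u t) then Lam rho (hist A Z u t) else (0::ennreal))"
      by auto
    show "(\<integral>\<^sup>+Z. (if D t (hist A Z u t) then Lam rho (hist A Z u t) else 0) \<partial>P.PM) =
      (\<integral>\<^sup>+Z. (if D t (hist A Z u t) then 1 else 0) \<partial>Q.PM)"
      unfolding e1 e2 ..
  qed
  also have "\<dots> = (\<integral>\<^sup>+Z. (if stops A Z u \<and> phi (decision A Z u) then 1 else 0) \<partial>Q.PM)"
    unfolding sum_eq[where X="\<lambda>_. 1"] using DmQ by (intro nn_integral_suminf[symmetric]) simp
  finally show ?thesis .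
qed

end


declare hist.simps(2)[simp del]

locale jbase =
  fixes A :: "'k::finite alg"
  assumes validj: "valid_alg A"
begin

lemma hist_Om[measurable]: "(\<lambda>\<omega>. list_fun (hist A (fst \<omega>) (snd \<omega>) t)) \<in> Om \<rightarrow>\<^sub>M obsM"
  using hist_meas[OF validj] by blast
lemma cnt_Om[measurable]: "(\<lambda>\<omega>. cnt A (fst \<omega>) (snd \<omega>) t b) \<in> Om \<rightarrow>\<^sub>M count_space UNIV"
  using hist_meas[OF validj] by blast
lemma arm_Om[measurable]: "(\<lambda>\<omega>. arm A (fst \<omega>) (snd \<omega>) t) \<in> Om \<rightarrow>\<^sub>M count_space UNIV"
  by (rule arm_meas[OF validj hist_Om])
lemma stp_Om[measurable]: "Measurable.pred Om (\<lambda>\<omega>. stp A s (snd \<omega>) (list_fun (hist A (fst \<omega>) (snd \<omega>) t)))"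
  using stp_meas[OF validj] by simp
lemma dec_Om[measurable]: "(\<lambda>\<omega>. dec A s (snd \<omega>) (list_fun (hist A (fst \<omega>) (snd \<omega>) t))) \<in> Om \<rightarrow>\<^sub>M count_space UNIV"
  using dec_meas[OF validj] by simp

lemma obsf_Om[measurable]: "(\<lambda>\<omega>. obsf A (fst \<omega>) (snd \<omega>) s) \<in> Om \<rightarrow>\<^sub>M obsS"
proof -
  have "(\<lambda>\<omega>. list_fun (hist A (fst \<omega>) (snd \<omega>) (Suc s)) s) \<in> Om \<rightarrow>\<^sub>M obsS"
    by (rule measurable_compose[OF hist_Om]) (simp add: obsM_eq)
  then show ?thesis by (simp add: list_fun_hist)
qed

lemma stp_obsf: "stp A t u (obsf A Z u) = stp A t u (list_fun (hist A Z u t))"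
  by (rule valid_stp[OF validj order_refl])

lemma dec_obsf: "dec A t u (obsf A Z u) = dec A t u (list_fun (hist A Z u t))"
  by (rule valid_dec[OF validj order_refl])

lemma stops_Om[measurable]: "Measurable.pred Om (\<lambda>\<omega>. stops A (fst \<omega>) (snd \<omega>))"
  unfolding stops_def stp_obsf by measurable

lemma tau_Om[measurable]: "(\<lambda>\<omega>. tau A (fst \<omega>) (snd \<omega>)) \<in> Om \<rightarrow>\<^sub>M count_space UNIV"
  unfolding tau_def stp_obsf by (rule measurable_Least) measurable

lemma decision_Om[measurable]: "(\<lambda>\<omega>. decision A (fst \<omega>) (snd \<omega>)) \<in> Om \<rightarrow>\<^sub>M count_space UNIV"
proof -
  have "(\<lambda>\<omega>. (\<lambda>t \<omega>. dec A t (snd \<omega>) (list_fun (hist A (fst \<omega>) (snd \<omega>) t))) (tau A (fst \<omega>) (snd \<omega>)) \<omega>) \<in> Om \<rightarrow>\<^sub>M count_space UNIV"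
    by (rule measurable_compose_countable[OF _ tau_Om]) measurable
  then show ?thesis by (simp add: decision_def dec_obsf)
qed

lemma cost_Om[measurable]: "(\<lambda>\<omega>. snd (snd (obsf A (fst \<omega>) (snd \<omega>) s))) \<in> borel_measurable Om"
proof -
  have "(\<lambda>x. snd (snd x)) \<in> borel_measurable obsS" unfolding obsS_def by measurable
  then show ?thesis using measurable_compose[OF obsf_Om] by blast
qed

lemma reward_Om[measurable]: "(\<lambda>\<omega>. fst (snd (obsf A (fst \<omega>) (snd \<omega>) s))) \<in> borel_measurable Om"
proof -
  have "(\<lambda>x. fst (snd x)) \<in> borel_measurable obsS" unfolding obsS_def by measurable
  then show ?thesis using measurable_compose[OF obsf_Om] by blast
qed

lemma armo_Om[measurable]: "(\<lambda>\<omega>. fst (obsf A (fst \<omega>) (snd \<omega>) s)) \<in> Om \<rightarrow>\<^sub>M count_space UNIV"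
proof -
  have "(\<lambda>x. fst x) \<in> obsS \<rightarrow>\<^sub>M count_space UNIV" unfolding obsS_def by measurable
  then show ?thesis using measurable_compose[OF obsf_Om] by blast
qed

lemma Jcost_Om[measurable]: "(\<lambda>\<omega>. Jcost A (fst \<omega>) (snd \<omega>)) \<in> borel_measurable Om"
proof -
  have "(\<lambda>\<omega>. (\<lambda>t \<omega>. if stops A (fst \<omega>) (snd \<omega>) then (\<Sum>s<t. ennreal (snd (snd (obsf A (fst \<omega>) (snd \<omega>) s)))) else \<infinity>) (tau A (fst \<omega>) (snd \<omega>)) \<omega>) \<in> borel_measurable Om"
    by (rule measurable_compose_countable[OF _ tau_Om]) measurable
  then show ?thesis by (simp add: Jcost_def)
qed

definition Cj :: "nat \<Rightarrow> ('k \<times> nat \<Rightarrow> real \<times> real) \<times> real \<Rightarrow> bool" where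
  "Cj s \<omega> \<longleftrightarrow> (\<forall>s'\<le>s. \<not> stp A s' (snd \<omega>) (list_fun (hist A (fst \<omega>) (snd \<omega>) s)))"

lemma Cj_Om[measurable]: "Measurable.pred Om (Cj s)"
  unfolding Cj_def by measurable

lemma Cj_iff: "Cj s \<omega> \<longleftrightarrow> (\<forall>s'\<le>s. \<not> stp A s' (snd \<omega>) (obsf A (fst \<omega>) (snd \<omega>)))"
  unfolding Cj_def using valid_stp[OF validj] by auto

lemma Cj_tau: "stops A Z u \<Longrightarrow> Cj s (Z,u) \<longleftrightarrow> s < tau A Z u"
proof -
  assume st: "stops A Z u"
  then obtain t0 where t0: "stp A t0 u (obsf A Z u)" unfolding stops_def by blast
  have L: "stp A (tau A Z u) u (obsf A Z u)" unfolding tau_def using t0 by (rule LeastI)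
  have N: "s' < tau A Z u \<Longrightarrow> \<not> stp A s' u (obsf A Z u)" for s'
    unfolding tau_def by (rule not_less_Least)
  show ?thesis unfolding Cj_iff
  proof
    assume "\<forall>s'\<le>s. \<not> stp A s' (snd (Z, u)) (obsf A (fst (Z, u)) (snd (Z, u)))"
    then show "s < tau A Z u" using L by (metis fst_conv snd_conv not_less)
  next
    assume "s < tau A Z u"
    then show "\<forall>s'\<le>s. \<not> stp A s' (snd (Z, u)) (obsf A (fst (Z, u)) (snd (Z, u)))"
      using N by auto
  qed
qed

end


declare hist.simps(2)[simp del]

lemma Lam_hist: "Lam rho (hist A Z u t) = (\<Prod>s<t. rho (fst (obsf A Z u s)) (snd (obsf A Z u s)))"
proof (induction t)
  case (Suc t)
  have "Lam rho (hist A Z u (Suc t)) = Lam rho (hist A Z u t) * rho (fst (obsf A Z u t)) (snd (obsf A Z u t))"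
    unfolding hist_Suc' Lam_def obsf_eq by simp
  then show ?case using Suc by simp
qed (simp add: Lam_def)

locale jmodel = jbase A for A :: "'k::finite alg" +
  fixes M :: "'k \<times> nat \<Rightarrow> (real \<times> real) measure" and U :: "real measure"
  assumes probM: "\<And>p. prob_space (M p)" and setsM: "\<And>p. sets (M p) = sets (borel \<Otimes>\<^sub>M borel)"
    and probU: "prob_space U" and setsU: "sets U = sets borel"
begin

abbreviation "IP \<equiv> PiM UNIV M \<Otimes>\<^sub>M U"

lemma sndo_Om[measurable]: "(\<lambda>\<omega>. snd (obsf A (fst \<omega>) (snd \<omega>) s)) \<in> Om \<rightarrow>\<^sub>M borel \<Otimes>\<^sub>M borel"
proof -
  have "(\<lambda>x. snd x) \<in> obsS \<rightarrow>\<^sub>M borel \<Otimes>\<^sub>M borel" unfolding obsS_def by measurable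
  then show ?thesis using measurable_compose[OF obsf_Om] by blast
qed

lemma phidec_Om[measurable]: "Measurable.pred Om (\<lambda>\<omega>. phi (decision A (fst \<omega>) (snd \<omega>)))"
  by (rule measurable_compose[OF decision_Om]) simp

lemma bm: "bmodel A M"
  by (intro bmodel.intro validj probM setsM)

lemma probP: "prob_space (PiM UNIV M)" using probM by (auto intro: prob_space_PiM)

lemma prob_IP: "prob_space IP" using probP probU by (rule prob_space_pair)

lemma sets_IP: "sets IP = sets Om"
  unfolding Om_def by (rule sets_pair_measure_cong[OF bmodel.sets_PM[OF bm] setsU])

lemma meas_IP: "f \<in> borel_measurable Om \<Longrightarrow> f \<in> borel_measurable IP"
  using measurable_cong_sets[OF sets_IP refl] by blast

lemma pred_IP: "Measurable.pred Om f \<Longrightarrow> Measurable.pred IP f"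
  using measurable_cong_sets[OF sets_IP refl] by blast

lemma tonelli: "f \<in> borel_measurable Om \<Longrightarrow>
   (\<integral>\<^sup>+\<omega>. f \<omega> \<partial>IP) = (\<integral>\<^sup>+u. (\<integral>\<^sup>+Z. f (Z,u) \<partial>PiM UNIV M) \<partial>U)"
  using pair_sigma_finite.nn_integral_snd[OF pair_sf[OF probP probU] meas_IP] by simp

lemma inner_meas: assumes "f \<in> borel_measurable Om"
  shows "(\<lambda>u. \<integral>\<^sup>+Z. f (Z,u) \<partial>PiM UNIV M) \<in> borel_measurable U"
proof -
  have sf: "sigma_finite_measure (PiM UNIV M)" using probP by (rule prob_space_imp_sigma_finite)
  have "f \<in> borel_measurable IP" using meas_IP[OF assms] .
  then have "(\<lambda>(u,Z). f (Z,u)) \<in> borel_measurable (U \<Otimes>\<^sub>M PiM UNIV M)"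
    using measurable_pair_swap_iff by blast
  from sigma_finite_measure.borel_measurable_nn_integral_fst[OF sf this] show ?thesis by simp
qed

lemma Cj_C: "Cj s (Z,u) = bmodel.C A u s Z"
  unfolding Cj_def bmodel.C_def[OF bm] by simp

lemma wald_j:
  assumes Ma: "\<And>a n. M (a,n) = Ma a"
    and phi[measurable]: "\<And>a. phi a \<in> borel_measurable (borel \<Otimes>\<^sub>M borel)"
  shows "(\<integral>\<^sup>+\<omega>. (\<Sum>s. if Cj s \<omega> then phi (arm A (fst \<omega>) (snd \<omega>) s) (snd (obsf A (fst \<omega>) (snd \<omega>) s)) else 0) \<partial>IP)
    = (\<Sum>a\<in>UNIV. (\<integral>\<^sup>+x. phi a x \<partial>Ma a) * (\<integral>\<^sup>+\<omega>. (\<Sum>s. if Cj s \<omega> \<and> arm A (fst \<omega>) (snd \<omega>) s = a then 1 else 0) \<partial>IP))"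
proof -
  have sndm: "(\<lambda>\<omega>. snd (obsf A (fst \<omega>) (snd \<omega>) s)) \<in> Om \<rightarrow>\<^sub>M borel \<Otimes>\<^sub>M borel" for s
  proof -
    have "(\<lambda>x. snd x) \<in> obsS \<rightarrow>\<^sub>M borel \<Otimes>\<^sub>M borel" unfolding obsS_def by measurable
    then show ?thesis using measurable_compose[OF obsf_Om] by blast
  qed
  define f where "f s \<omega> = (if Cj s \<omega> then phi (arm A (fst \<omega>) (snd \<omega>) s) (snd (obsf A (fst \<omega>) (snd \<omega>) s)) else 0)" for s \<omega>
  define ind where "ind s a \<omega> = (if Cj s \<omega> \<and> arm A (fst \<omega>) (snd \<omega>) s = a then 1 else (0::ennreal))" for s a \<omega>
  have fm: "f s \<in> borel_measurable Om" for s
  proof -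
    have "(\<lambda>\<omega>. (\<lambda>a \<omega>. if Cj s \<omega> then phi a (snd (obsf A (fst \<omega>) (snd \<omega>) s)) else 0) (arm A (fst \<omega>) (snd \<omega>) s) \<omega>) \<in> borel_measurable Om"
      by (rule measurable_compose_countable[OF _ arm_Om]) measurable
    then show ?thesis unfolding f_def by simp
  qed
  have indm: "ind s a \<in> borel_measurable Om" for s a unfolding ind_def by measurable
  have m_a: "\<And>a. (\<integral>\<^sup>+x. phi a x \<partial>Ma a) = (\<integral>\<^sup>+x. phi a x \<partial>Ma a)" by simp
  have per_s: "(\<integral>\<^sup>+\<omega>. f s \<omega> \<partial>IP) = (\<Sum>a\<in>UNIV. (\<integral>\<^sup>+x. phi a x \<partial>Ma a) * (\<integral>\<^sup>+\<omega>. ind s a \<omega> \<partial>IP))" for s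
  proof -
    have "(\<integral>\<^sup>+\<omega>. f s \<omega> \<partial>IP) = (\<integral>\<^sup>+u. (\<integral>\<^sup>+Z. f s (Z,u) \<partial>PiM UNIV M) \<partial>U)"
      by (rule tonelli[OF fm])
    also have "\<dots> = (\<integral>\<^sup>+u. (\<Sum>a\<in>UNIV. (\<integral>\<^sup>+x. phi a x \<partial>Ma a) * (\<integral>\<^sup>+Z. ind s a (Z,u) \<partial>PiM UNIV M)) \<partial>U)"
    proof (rule nn_integral_cong)
      fix u
      show "(\<integral>\<^sup>+Z. f s (Z,u) \<partial>PiM UNIV M) = (\<Sum>a\<in>UNIV. (\<integral>\<^sup>+x. phi a x \<partial>Ma a) * (\<integral>\<^sup>+Z. ind s a (Z,u) \<partial>PiM UNIV M))"
        using bmodel.wald_s[OF bm, of Ma phi u s] Ma phi unfolding f_def ind_def Cj_C fst_conv snd_conv by simp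
    qed
    also have "\<dots> = (\<Sum>a\<in>UNIV. (\<integral>\<^sup>+x. phi a x \<partial>Ma a) * (\<integral>\<^sup>+u. (\<integral>\<^sup>+Z. ind s a (Z,u) \<partial>PiM UNIV M) \<partial>U))"
      using inner_meas[OF indm] by (simp add: nn_integral_sum nn_integral_cmult)
    also have "\<dots> = (\<Sum>a\<in>UNIV. (\<integral>\<^sup>+x. phi a x \<partial>Ma a) * (\<integral>\<^sup>+\<omega>. ind s a \<omega> \<partial>IP))"
      by (simp add: tonelli[OF indm])
    finally show ?thesis .
  qed
  have "(\<integral>\<^sup>+\<omega>. (\<Sum>s. f s \<omega>) \<partial>IP) = (\<Sum>s. \<integral>\<^sup>+\<omega>. f s \<omega> \<partial>IP)"
    using fm by (intro nn_integral_suminf) (simp add: meas_IP)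
  also have "\<dots> = (\<Sum>s. \<Sum>a\<in>UNIV. (\<integral>\<^sup>+x. phi a x \<partial>Ma a) * (\<integral>\<^sup>+\<omega>. ind s a \<omega> \<partial>IP))"
    by (simp add: per_s)
  also have "\<dots> = (\<Sum>a\<in>UNIV. \<Sum>s. (\<integral>\<^sup>+x. phi a x \<partial>Ma a) * (\<integral>\<^sup>+\<omega>. ind s a \<omega> \<partial>IP))"
    by (rule suminf_sum) simp
  also have "\<dots> = (\<Sum>a\<in>UNIV. (\<integral>\<^sup>+x. phi a x \<partial>Ma a) * (\<Sum>s. \<integral>\<^sup>+\<omega>. ind s a \<omega> \<partial>IP))"
    by (simp add: ennreal_suminf_cmult)
  also have "\<dots> = (\<Sum>a\<in>UNIV. (\<integral>\<^sup>+x. phi a x \<partial>Ma a) * (\<integral>\<^sup>+\<omega>. (\<Sum>s. ind s a \<omega>) \<partial>IP))"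
    using indm by (subst nn_integral_suminf) (simp_all add: meas_IP)
  finally show ?thesis unfolding f_def ind_def .
qed

end

locale jcm = P: jmodel A Mp U + Q: jmodel A Mq U for A :: "'k::finite alg" and Mp Mq U +
  fixes rho :: "'k \<Rightarrow> real \<times> real \<Rightarrow> ennreal"
  assumes Mq: "\<And>p. Mq p = density (Mp p) (rho (fst p))"
    and rhom[measurable]: "\<And>a. rho a \<in> borel_measurable (borel \<Otimes>\<^sub>M borel)"
begin

lemma cmu: "cm A Mp Mq rho"
  by (intro cm.intro cm_axioms.intro P.bm Q.bm) (auto simp: Mq)

lemma Lam_Om: "(\<lambda>\<omega>. Lam rho (hist A (fst \<omega>) (snd \<omega>) t)) \<in> borel_measurable Om"
proof -
  have sndm: "(\<lambda>\<omega>. snd (obsf A (fst \<omega>) (snd \<omega>) s)) \<in> Om \<rightarrow>\<^sub>M borel \<Otimes>\<^sub>M borel" for s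
  proof -
    have "(\<lambda>x. snd x) \<in> obsS \<rightarrow>\<^sub>M borel \<Otimes>\<^sub>M borel" unfolding obsS_def by measurable
    then show ?thesis using measurable_compose[OF P.obsf_Om] by blast
  qed
  have r: "(\<lambda>\<omega>. rho (fst (obsf A (fst \<omega>) (snd \<omega>) s)) (snd (obsf A (fst \<omega>) (snd \<omega>) s))) \<in> borel_measurable Om" for s
  proof -
    have "(\<lambda>\<omega>. (\<lambda>a \<omega>. rho a (snd (obsf A (fst \<omega>) (snd \<omega>) s))) (fst (obsf A (fst \<omega>) (snd \<omega>) s)) \<omega>) \<in> borel_measurable Om"
      by (rule measurable_compose_countable[OF _ P.armo_Om]) (rule measurable_compose[OF sndm rhom])
    then show ?thesis by simp
  qed
  note r[measurable]
  show ?thesis unfolding Lam_hist by measurable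
qed

lemma cm_j:
  "(\<integral>\<^sup>+\<omega>. (if stops A (fst \<omega>) (snd \<omega>) \<and> phi (decision A (fst \<omega>) (snd \<omega>))
        then Lam rho (hist A (fst \<omega>) (snd \<omega>) (tau A (fst \<omega>) (snd \<omega>))) else 0) \<partial>P.IP)
   = (\<integral>\<^sup>+\<omega>. (if stops A (fst \<omega>) (snd \<omega>) \<and> phi (decision A (fst \<omega>) (snd \<omega>)) then 1 else 0) \<partial>Q.IP)"
proof -
  have m1: "(\<lambda>\<omega>. if stops A (fst \<omega>) (snd \<omega>) \<and> phi (decision A (fst \<omega>) (snd \<omega>))
        then Lam rho (hist A (fst \<omega>) (snd \<omega>) (tau A (fst \<omega>) (snd \<omega>))) else 0) \<in> borel_measurable Om"
  proof -
    have "(\<lambda>\<omega>. (\<lambda>t \<omega>. if stops A (fst \<omega>) (snd \<omega>) \<and> phi (decision A (fst \<omega>) (snd \<omega>))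
        then Lam rho (hist A (fst \<omega>) (snd \<omega>) t) else 0) (tau A (fst \<omega>) (snd \<omega>)) \<omega>) \<in> borel_measurable Om"
      by (rule measurable_compose_countable[OF _ P.tau_Om]) (measurable, rule Lam_Om, measurable)
    then show ?thesis by simp
  qed
  have m2: "(\<lambda>\<omega>. if stops A (fst \<omega>) (snd \<omega>) \<and> phi (decision A (fst \<omega>) (snd \<omega>)) then 1 else (0::ennreal)) \<in> borel_measurable Om"
    by measurable
  show ?thesis
    unfolding P.tonelli[OF m1] Q.tonelli[OF m2] fst_conv snd_conv
    using cm.CM_event[OF cmu] by simp
qed

end


definition gfun :: "(real \<Rightarrow> real) \<Rightarrow> (real \<Rightarrow> real) \<Rightarrow> real \<Rightarrow> real \<Rightarrow> real \<Rightarrow> real" where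
  "gfun theta b m m' x = (theta m - theta m') * x - (b (theta m) - b (theta m'))"

context
  fixes H theta b Theta
  assumes EF: "exp_family H theta b Theta"
begin

lemma sets_H: "sets H = sets borel" using EF unfolding exp_family_def by blast

lemma nu_prob: "m \<in> {0..1} \<Longrightarrow> prob_space (expfam_nu H theta b m)"
  using EF unfolding exp_family_def by blast

lemma nu_int: "m \<in> {0..1} \<Longrightarrow> integrable (expfam_nu H theta b m) (\<lambda>x. x)"
  using EF unfolding exp_family_def by blast

lemma nu_mean: "m \<in> {0..1} \<Longrightarrow> (\<integral>x. x \<partial>expfam_nu H theta b m) = m"
  using EF unfolding exp_family_def by blast

lemma sets_nu: "sets (expfam_nu H theta b m) = sets borel"
  by (simp add: expfam_nu_def sets_H)

lemma meas_H: "f \<in> borel_measurable borel \<Longrightarrow> f \<in> borel_measurable H"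
  using measurable_cong_sets[OF sets_H refl] by blast

lemma nu_density:
  "expfam_nu H theta b m' = density (expfam_nu H theta b m) (\<lambda>x. ennreal (exp (- gfun theta b m m' x)))"
proof -
  have "density (expfam_nu H theta b m) (\<lambda>x. ennreal (exp (- gfun theta b m m' x)))
     = density H (\<lambda>x. ennreal (exp (theta m * x - b (theta m))) * ennreal (exp (- gfun theta b m m' x)))"
    unfolding expfam_nu_def by (rule density_density_eq) (auto intro!: meas_H simp: gfun_def)
  also have "(\<lambda>x. ennreal (exp (theta m * x - b (theta m))) * ennreal (exp (- gfun theta b m m' x)))
      = (\<lambda>x. ennreal (exp (theta m' * x - b (theta m'))))"
    by (auto simp: gfun_def ennreal_mult[symmetric] exp_add[symmetric] algebra_simps)
  finally show ?thesis unfolding expfam_nu_def by simp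
qed

lemma g_int: "m \<in> {0..1} \<Longrightarrow> integrable (expfam_nu H theta b m) (gfun theta b m m')"
proof -
  assume m: "m \<in> {0..1}"
  interpret prob_space "expfam_nu H theta b m" using nu_prob[OF m] .
  have i1: "integrable (expfam_nu H theta b m) (\<lambda>x. (theta m - theta m') * x)"
    using nu_int[OF m] by (rule integrable_mult_right)
  have i2: "integrable (expfam_nu H theta b m) (\<lambda>x. b (theta m) - b (theta m'))" by simp
  show ?thesis unfolding gfun_def using Bochner_Integration.integrable_diff[OF i1 i2] by simp
qed

lemma kl_eq:
  assumes m: "m \<in> {0..1}" and m': "m' \<in> {0..1}"
  shows "(\<integral>x. gfun theta b m m' x \<partial>expfam_nu H theta b m) = kl (expfam_nu H theta b) m m'"
proof -
  let ?N = "expfam_nu H theta b m" and ?M = "expfam_nu H theta b m'"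
  have gm: "gfun theta b m m' \<in> borel_measurable borel" unfolding gfun_def by measurable
  have dens: "?N = density ?M (\<lambda>x. ennreal (exp (gfun theta b m m' x)))"
  proof -
    have e: "- gfun theta b m' m x = gfun theta b m m' x" for x by (simp add: gfun_def algebra_simps)
    show ?thesis using nu_density[of m m', unfolded e] .
  qed
  have sf: "sigma_finite_measure ?M" using nu_prob[OF m'] by (rule prob_space_imp_sigma_finite)
  have fm: "(\<lambda>x. ennreal (exp (gfun theta b m m' x))) \<in> borel_measurable ?M"
  proof -
    have "(\<lambda>x. ennreal (exp (gfun theta b m m' x))) \<in> borel_measurable borel" unfolding gfun_def by measurable
    then show ?thesis using measurable_cong_sets[OF sets_nu refl] by blast
  qed
  have ae: "AE x in ?M. ennreal (exp (gfun theta b m m' x)) = RN_deriv ?M ?N x"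
    by (rule sigma_finite_measure.RN_deriv_unique[OF sf fm dens[symmetric]])
  have ae2: "AE x in ?N. ennreal (exp (gfun theta b m m' x)) = RN_deriv ?M ?N x"
  proof -
    have "AE x in density ?M (\<lambda>x. ennreal (exp (gfun theta b m m' x))). ennreal (exp (gfun theta b m m' x)) = RN_deriv ?M ?N x"
      using ae fm by (subst AE_density) auto
    then show ?thesis unfolding dens[symmetric] .
  qed
  have "kl (expfam_nu H theta b) m m' = (\<integral>x. log (exp 1) (enn2real (RN_deriv ?M ?N x)) \<partial>?N)"
    by (simp add: kl_def KL_divergence_def entropy_density_def comp_def)
  also have "\<dots> = (\<integral>x. gfun theta b m m' x \<partial>?N)"
  proof (rule integral_cong_AE)
    have rn: "RN_deriv ?M ?N \<in> borel_measurable ?N"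
      using borel_measurable_RN_deriv[of ?M ?N] measurable_cong_sets[of ?M ?N] sets_nu by metis
    then show "(\<lambda>x. log (exp 1) (enn2real (RN_deriv ?M ?N x))) \<in> borel_measurable ?N" by measurable
    show "gfun theta b m m' \<in> borel_measurable ?N" using gm measurable_cong_sets[OF sets_nu refl] by blast
    show "AE x in ?N. log (exp 1) (enn2real (RN_deriv ?M ?N x)) = gfun theta b m m' x"
      using ae2
    proof eventually_elim
      fix x assume h: "ennreal (exp (gfun theta b m m' x)) = RN_deriv ?M ?N x"
      show "log (exp 1) (enn2real (RN_deriv ?M ?N x)) = gfun theta b m m' x" unfolding h[symmetric] by (simp add: log_def)
    qed
  qed
  finally show ?thesis by simp
qed

end


lemma pw_ineq:
  fixes x :: "nat \<Rightarrow> real" and k :: real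
  assumes k: "1 \<le> k"
  shows "(\<Sum>s<T. ennreal (- x s)) + ennreal (1 + ln k) \<le>
         (\<Sum>s<T. ennreal (x s)) + ennreal k * (\<Prod>s<T. ennreal (exp (- x s)))"
proof -
  define P where "P = (\<Sum>s<T. max (x s) 0)"
  define N where "N = (\<Sum>s<T. max (- x s) 0)"
  have PN: "P - N = (\<Sum>s<T. x s)" unfolding P_def N_def sum_subtractf[symmetric]
    by (intro sum.cong) auto
  have P0: "0 \<le> P" and N0: "0 \<le> N" unfolding P_def N_def by (auto intro: sum_nonneg)
  have sp: "(\<Sum>s<T. ennreal (x s)) = ennreal P"
    unfolding P_def by (subst sum_ennreal[symmetric]) (auto intro!: sum.cong simp: ennreal_max_0)
  have sn: "(\<Sum>s<T. ennreal (- x s)) = ennreal N"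
    unfolding N_def by (subst sum_ennreal[symmetric]) (auto intro!: sum.cong simp: ennreal_max_0)
  have pr: "(\<Prod>s<T. ennreal (exp (- x s))) = ennreal (exp (- (P - N)))"
    unfolding PN by (simp add: prod_ennreal exp_sum[symmetric] sum_negf)
  have k0: "0 < k" using k by simp
  have lk: "0 \<le> 1 + ln k" using k by simp
  have key: "N + (1 + ln k) \<le> P + k * exp (- (P - N))"
  proof -
    have y: "0 < k * exp (- (P - N))" using k0 by simp
    have "ln (k * exp (- (P - N))) \<le> k * exp (- (P - N)) - 1" by (rule ln_le_minus_one[OF y])
    moreover have "ln (k * exp (- (P - N))) = ln k - (P - N)" using k0 by (simp add: ln_mult)
    ultimately show ?thesis by simp
  qed
  have "(\<Sum>s<T. ennreal (- x s)) + ennreal (1 + ln k) = ennreal (N + (1 + ln k))"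
    using N0 lk by (simp add: sn ennreal_plus)
  also have "\<dots> \<le> ennreal (P + k * exp (- (P - N)))" using key by (rule ennreal_leI)
  also have "\<dots> = (\<Sum>s<T. ennreal (x s)) + ennreal k * (\<Prod>s<T. ennreal (exp (- x s)))"
    using P0 k0 by (simp add: sp pr ennreal_plus ennreal_mult)
  finally show ?thesis .
qed

lemma suminf_lessT: "(\<Sum>s. if s < T then f s else (0::ennreal)) = (\<Sum>s<T. f s)"
  by (subst suminf_finite[of "{..<T}"]) auto



declare hist.simps(2)[simp del]

locale setting =
  fixes H :: "real measure" and theta b :: "real \<Rightarrow> real" and Theta :: "real set"
    and nuc :: "real \<Rightarrow> real measure" and l :: real
    and A :: "'k::finite alg" and mu c :: "'k \<Rightarrow> real"
  assumes EF: "exp_family H theta b Theta" and CF: "cost_family nuc l" and validA: "valid_alg A"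
    and muin: "\<And>a. mu a \<in> {0..1}" and cin: "\<And>a. c a \<in> {l..1}"
begin

abbreviation "nu \<equiv> expfam_nu H theta b"

definition Ma :: "'k \<Rightarrow> (real \<times> real) measure" where
  "Ma a = nu (mu a) \<Otimes>\<^sub>M nuc (c a)"

abbreviation "U \<equiv> uniform_measure lborel {0..1::real}"

lemma probU: "prob_space U"
  by (rule prob_space_uniform_measure) auto

lemma setsU: "sets U = sets borel" by simp

lemma nuc_prob: "c' \<in> {l..1} \<Longrightarrow> prob_space (nuc c')"
  using CF unfolding cost_family_def by blast
lemma nuc_sets: "c' \<in> {l..1} \<Longrightarrow> sets (nuc c') = sets borel"
  using CF unfolding cost_family_def by blast
lemma nuc_AE: "c' \<in> {l..1} \<Longrightarrow> AE x in nuc c'. x \<in> {l..1}"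
  using CF unfolding cost_family_def by blast
lemma nuc_int: "c' \<in> {l..1} \<Longrightarrow> integrable (nuc c') (\<lambda>x. x)"
  using CF unfolding cost_family_def by blast
lemma nuc_mean: "c' \<in> {l..1} \<Longrightarrow> (\<integral>x. x \<partial>nuc c') = c'"
  using CF unfolding cost_family_def by blast
lemma l_pos: "0 < l" using CF unfolding cost_family_def by blast

lemma probMa: "prob_space (Ma a)"
  unfolding Ma_def using nu_prob[OF EF muin] nuc_prob[OF cin] by (rule prob_space_pair)

lemma setsMa: "sets (Ma a) = sets (borel \<Otimes>\<^sub>M borel)"
  unfolding Ma_def by (rule sets_pair_measure_cong[OF sets_nu[OF EF] nuc_sets[OF cin]])

sublocale J: jmodel A "\<lambda>p. Ma (fst p)" U
  by (intro jmodel.intro jmodel_axioms.intro jbase.intro validA probMa setsMa probU setsU)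

lemma IP_eq: "inst_measure nu nuc mu c = J.IP"
  unfolding inst_measure_def Ma_def ..

definition Na :: "'k \<Rightarrow> ennreal" where
  "Na a = (\<integral>\<^sup>+\<omega>. (\<Sum>s. if J.Cj s \<omega> \<and> arm A (fst \<omega>) (snd \<omega>) s = a then 1 else 0) \<partial>J.IP)"

lemma cost_mean: "(\<integral>\<^sup>+x. ennreal (snd x) \<partial>Ma a) = ennreal (c a)"
proof -
  have ps: "pair_sigma_finite (nu (mu a)) (nuc (c a))"
    using nu_prob[OF EF muin] nuc_prob[OF cin] by (rule pair_sf)
  have s: "(\<lambda>x. snd x) \<in> (nu (mu a) \<Otimes>\<^sub>M nuc (c a)) \<rightarrow>\<^sub>M borel"
    using measurable_snd measurable_cong_sets[OF refl nuc_sets[OF cin]] by blast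
  have m: "(\<lambda>x. ennreal (snd x)) \<in> borel_measurable (nu (mu a) \<Otimes>\<^sub>M nuc (c a))"
    using s by measurable
  have inner: "(\<integral>\<^sup>+y. ennreal y \<partial>nuc (c a)) = ennreal (c a)"
  proof -
    have "AE y in nuc (c a). 0 \<le> y" using nuc_AE[OF cin[of a]] by eventually_elim (use l_pos in auto)
    then show ?thesis using nuc_int[OF cin] nuc_mean[OF cin] by (simp add: nn_integral_eq_integral)
  qed
  have "(\<integral>\<^sup>+x. ennreal (snd x) \<partial>Ma a) = (\<integral>\<^sup>+x. (\<integral>\<^sup>+y. ennreal (snd (x,y)) \<partial>nuc (c a)) \<partial>nu (mu a))"
    unfolding Ma_def by (rule sigma_finite_measure.nn_integral_fst[OF prob_space_imp_sigma_finite[OF nuc_prob[OF cin]] m, symmetric])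
  also have "\<dots> = ennreal (c a)"
    using inner prob_space.emeasure_space_1[OF nu_prob[OF EF muin]] by (simp add: nn_integral_const)
  finally show ?thesis .
qed

lemma cost_wald:
  assumes AEs: "AE \<omega> in J.IP. stops A (fst \<omega>) (snd \<omega>)"
  shows "(\<integral>\<^sup>+\<omega>. Jcost A (fst \<omega>) (snd \<omega>) \<partial>J.IP) = (\<Sum>a\<in>UNIV. ennreal (c a) * Na a)"
proof -
  have "(\<integral>\<^sup>+\<omega>. Jcost A (fst \<omega>) (snd \<omega>) \<partial>J.IP)
      = (\<integral>\<^sup>+\<omega>. (\<Sum>s. if J.Cj s \<omega> then (\<lambda>a x. ennreal (snd x)) (arm A (fst \<omega>) (snd \<omega>) s) (snd (obsf A (fst \<omega>) (snd \<omega>) s)) else 0) \<partial>J.IP)"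
    using AEs
  proof (intro nn_integral_cong_AE, eventually_elim)
    fix \<omega> :: "('k \<times> nat \<Rightarrow> real \<times> real) \<times> real"
    assume st: "stops A (fst \<omega>) (snd \<omega>)"
    obtain Z u where om: "\<omega> = (Z,u)" by (cases \<omega>)
    have "(\<Sum>s. if J.Cj s \<omega> then ennreal (snd (snd (obsf A Z u s))) else 0)
        = (\<Sum>s. if s < tau A Z u then ennreal (snd (snd (obsf A Z u s))) else 0)"
      using J.Cj_tau[of Z u] st unfolding om by simp
    also have "\<dots> = (\<Sum>s<tau A Z u. ennreal (snd (snd (obsf A Z u s))))" by (rule suminf_lessT)
    finally show "Jcost A (fst \<omega>) (snd \<omega>) = (\<Sum>s. if J.Cj s \<omega> then (\<lambda>a x. ennreal (snd x)) (arm A (fst \<omega>) (snd \<omega>) s) (snd (obsf A (fst \<omega>) (snd \<omega>) s)) else 0)"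
      using st unfolding om fst_conv snd_conv by (simp add: Jcost_def)
  qed
  also have "\<dots> = (\<Sum>a\<in>UNIV. (\<integral>\<^sup>+x. ennreal (snd x) \<partial>Ma a) * Na a)"
    unfolding Na_def by (rule J.wald_j[where Ma=Ma]) auto
  also have "\<dots> = (\<Sum>a\<in>UNIV. ennreal (c a) * Na a)" by (simp add: cost_mean)
  finally show ?thesis .
qed

end


declare hist.simps(2)[simp del]

locale setting2 = setting +
  fixes lam :: "'a \<Rightarrow> real"
  assumes lamin: "\<And>a. lam a \<in> {0..1}"
begin

definition g :: "'a \<Rightarrow> real \<Rightarrow> real" where
  "g a = gfun theta b (mu a) (lam a)"

definition rho :: "'a \<Rightarrow> real \<times> real \<Rightarrow> ennreal" where
  "rho a x = ennreal (exp (- g a (fst x)))"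

definition Mb :: "'a \<Rightarrow> (real \<times> real) measure" where
  "Mb a = nu (lam a) \<Otimes>\<^sub>M nuc (c a)"

lemma g_meas[measurable]: "g a \<in> borel_measurable borel"
  unfolding g_def gfun_def by measurable

lemma rho_meas[measurable]: "rho a \<in> borel_measurable (borel \<Otimes>\<^sub>M borel)"
  unfolding rho_def by measurable

lemma probMb: "prob_space (Mb a)"
  unfolding Mb_def using nu_prob[OF EF lamin] nuc_prob[OF cin] by (rule prob_space_pair)

lemma setsMb: "sets (Mb a) = sets (borel \<Otimes>\<^sub>M borel)"
  unfolding Mb_def by (rule sets_pair_measure_cong[OF sets_nu[OF EF] nuc_sets[OF cin]])

lemma Mb_density: "Mb a = density (Ma a) (rho a)"
proof -
  have f: "(\<lambda>x. ennreal (exp (- g a x))) \<in> borel_measurable (nu (mu a))"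
  proof -
    have "(\<lambda>x. ennreal (exp (- g a x))) \<in> borel_measurable borel" by measurable
    then show ?thesis using measurable_cong_sets[OF sets_nu[OF EF] refl] by blast
  qed
  have sf: "sigma_finite_measure (nuc (c a))" by (rule prob_space_imp_sigma_finite[OF nuc_prob[OF cin]])
  have "Mb a = density (nu (mu a)) (\<lambda>x. ennreal (exp (- g a x))) \<Otimes>\<^sub>M density (nuc (c a)) (\<lambda>_. 1)"
    unfolding Mb_def g_def using nu_density[OF EF, of "lam a" "mu a"] by (simp add: density_1)
  also have "\<dots> = density (Ma a) (\<lambda>(x,y). ennreal (exp (- g a x)) * 1)"
    unfolding Ma_def by (rule pair_measure_density[OF f]) (auto simp: density_1 sf)
  also have "(\<lambda>(x,y). ennreal (exp (- g a x)) * 1) = rho a"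
    by (auto simp: rho_def fun_eq_iff)
  finally show ?thesis .
qed

sublocale Q: jmodel A "\<lambda>p. Mb (fst p)" U
  by (intro jmodel.intro jmodel_axioms.intro jbase.intro validA probMb setsMb probU setsU)

sublocale C: jcm A "\<lambda>p. Ma (fst p)" "\<lambda>p. Mb (fst p)" U rho
  by (intro jcm.intro jcm_axioms.intro J.jmodel_axioms Q.jmodel_axioms jbase.intro validA
        Mb_density rho_meas)

lemma IQ_eq: "inst_measure nu nuc lam c = Q.IP"
  unfolding inst_measure_def Mb_def ..

lemma fst_integral: "f \<in> borel_measurable borel \<Longrightarrow>
   (\<integral>\<^sup>+x. ennreal (f (fst x)) \<partial>Ma a) = (\<integral>\<^sup>+r. ennreal (f r) \<partial>nu (mu a))"
proof -
  assume fm: "f \<in> borel_measurable borel"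
  have fstm: "(\<lambda>x. fst x) \<in> (nu (mu a) \<Otimes>\<^sub>M nuc (c a)) \<rightarrow>\<^sub>M borel"
    using measurable_fst measurable_cong_sets[OF refl sets_nu[OF EF]] by blast
  have m: "(\<lambda>x. ennreal (f (fst x))) \<in> borel_measurable (nu (mu a) \<Otimes>\<^sub>M nuc (c a))"
    using fstm fm by measurable
  have "(\<integral>\<^sup>+x. ennreal (f (fst x)) \<partial>Ma a) = (\<integral>\<^sup>+x. (\<integral>\<^sup>+y. ennreal (f (fst (x,y))) \<partial>nuc (c a)) \<partial>nu (mu a))"
    unfolding Ma_def by (rule sigma_finite_measure.nn_integral_fst[OF prob_space_imp_sigma_finite[OF nuc_prob[OF cin]] m, symmetric])
  also have "\<dots> = (\<integral>\<^sup>+r. ennreal (f r) \<partial>nu (mu a))"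
    using prob_space.emeasure_space_1[OF nuc_prob[OF cin]] by (simp add: nn_integral_const)
  finally show ?thesis .
qed

definition Ep :: "'a \<Rightarrow> ennreal" where "Ep a = (\<integral>\<^sup>+r. ennreal (g a r) \<partial>nu (mu a))"
definition Em :: "'a \<Rightarrow> ennreal" where "Em a = (\<integral>\<^sup>+r. ennreal (- g a r) \<partial>nu (mu a))"

lemma Ep_fin: "Ep a \<noteq> \<infinity>" and Em_fin: "Em a \<noteq> \<infinity>"
  and Ep_Em: "enn2real (Ep a) - enn2real (Em a) = kl nu (mu a) (lam a)"
proof -
  have i: "integrable (nu (mu a)) (g a)" unfolding g_def by (rule g_int[OF EF muin])
  show "Ep a \<noteq> \<infinity>" unfolding Ep_def using integrableD(2)[OF i] .
  show "Em a \<noteq> \<infinity>" unfolding Em_def using integrableD(3)[OF i] .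
  show "enn2real (Ep a) - enn2real (Em a) = kl nu (mu a) (lam a)"
  proof -
    have "integral\<^sup>L (nu (mu a)) (g a) = enn2real (Ep a) - enn2real (Em a)"
      using real_lebesgue_integral_def[OF i] unfolding Ep_def Em_def by simp
    moreover have "integral\<^sup>L (nu (mu a)) (g a) = kl nu (mu a) (lam a)"
      using kl_eq[OF EF muin lamin] unfolding g_def by simp
    ultimately show ?thesis by simp
  qed
qed

end


declare hist.simps(2)[simp del]

lemma ind_int: "Measurable.pred M P \<Longrightarrow> (\<integral>\<^sup>+\<omega>. (if P \<omega> then 1 else 0) \<partial>M) = emeasure M {\<omega>\<in>space M. P \<omega>}"
proof -
  assume P: "Measurable.pred M P"
  have "(\<integral>\<^sup>+\<omega>. (if P \<omega> then 1 else 0) \<partial>M) = (\<integral>\<^sup>+\<omega>. indicator {\<omega>\<in>space M. P \<omega>} \<omega> \<partial>M)"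
    by (rule nn_integral_cong) (auto simp: indicator_def)
  also have "\<dots> = emeasure M {\<omega>\<in>space M. P \<omega>}"
    using predE[OF P] by (rule nn_integral_indicator)
  finally show ?thesis .
qed

lemma (in jbase) G_Om:
  fixes phi :: "'k \<Rightarrow> real \<times> real \<Rightarrow> ennreal"
  assumes [measurable]: "\<And>a. phi a \<in> borel_measurable (borel \<Otimes>\<^sub>M borel)"
  shows "(\<lambda>\<omega>. \<Sum>s. if Cj s \<omega> then phi (arm A (fst \<omega>) (snd \<omega>) s) (snd (obsf A (fst \<omega>) (snd \<omega>) s)) else 0) \<in> borel_measurable Om"
proof -
  have sndm[measurable]: "(\<lambda>\<omega>. snd (obsf A (fst \<omega>) (snd \<omega>) s)) \<in> Om \<rightarrow>\<^sub>M borel \<Otimes>\<^sub>M borel" for s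
  proof -
    have "(\<lambda>x. snd x) \<in> obsS \<rightarrow>\<^sub>M borel \<Otimes>\<^sub>M borel" unfolding obsS_def by measurable
    then show ?thesis using measurable_compose[OF obsf_Om] by blast
  qed
  have fm[measurable]: "(\<lambda>\<omega>. if Cj s \<omega> then phi (arm A (fst \<omega>) (snd \<omega>) s) (snd (obsf A (fst \<omega>) (snd \<omega>) s)) else 0) \<in> borel_measurable Om" for s
  proof -
    have "(\<lambda>\<omega>. (\<lambda>a \<omega>. if Cj s \<omega> then phi a (snd (obsf A (fst \<omega>) (snd \<omega>) s)) else 0) (arm A (fst \<omega>) (snd \<omega>) s) \<omega>) \<in> borel_measurable Om"
      by (rule measurable_compose_countable[OF _ arm_Om]) measurable
    then show ?thesis by simp
  qed
  show ?thesis by (intro borel_measurable_suminf_order fm)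
qed

context setting2 begin

lemma LA_Om: "(\<lambda>\<omega>. if stops A (fst \<omega>) (snd \<omega>) \<and> phi (decision A (fst \<omega>) (snd \<omega>))
        then Lam rho (hist A (fst \<omega>) (snd \<omega>) (tau A (fst \<omega>) (snd \<omega>))) else 0) \<in> borel_measurable Om"
proof -
  have "(\<lambda>\<omega>. (\<lambda>t \<omega>. if stops A (fst \<omega>) (snd \<omega>) \<and> phi (decision A (fst \<omega>) (snd \<omega>))
      then Lam rho (hist A (fst \<omega>) (snd \<omega>) t) else 0) (tau A (fst \<omega>) (snd \<omega>)) \<omega>) \<in> borel_measurable Om"
    by (rule measurable_compose_countable[OF _ J.tau_Om]) (measurable, rule C.Lam_Om, measurable)
  then show ?thesis by simp
qed

lemma lam_bound:
  assumes AEs: "AE \<omega> in J.IP. stops A (fst \<omega>) (snd \<omega>)"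
    and pacmu: "measure J.IP {\<omega> \<in> space J.IP. stops A (fst \<omega>) (snd \<omega>) \<and> decision A (fst \<omega>) (snd \<omega>) \<noteq> best_arm mu} \<le> \<delta>"
    and paclam: "measure Q.IP {\<omega> \<in> space Q.IP. stops A (fst \<omega>) (snd \<omega>) \<and> decision A (fst \<omega>) (snd \<omega>) \<noteq> best_arm lam} \<le> \<delta>"
    and neq: "best_arm lam \<noteq> best_arm mu"
    and d0: "0 < \<delta>" and d1: "\<delta> < 1/2"
    and Nfin: "\<And>a. Na a \<noteq> \<infinity>"
  shows "(1 - \<delta>) * ln (1/\<delta>) - 2 \<le> (\<Sum>a\<in>UNIV. enn2real (Na a) * kl nu (mu a) (lam a))"
proof -
  interpret PI: prob_space J.IP by (rule J.prob_IP)
  interpret QI: prob_space Q.IP by (rule Q.prob_IP)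
  define SAc where "SAc \<omega> \<longleftrightarrow> stops A (fst \<omega>) (snd \<omega>) \<and> decision A (fst \<omega>) (snd \<omega>) = best_arm mu" for \<omega>
  define SBc where "SBc \<omega> \<longleftrightarrow> stops A (fst \<omega>) (snd \<omega>) \<and> decision A (fst \<omega>) (snd \<omega>) \<noteq> best_arm mu" for \<omega>
  have SAm: "Measurable.pred Om SAc" unfolding SAc_def by measurable
  have SBm: "Measurable.pred Om SBc" unfolding SBc_def by measurable
  define SA where "SA = {\<omega> \<in> space J.IP. SAc \<omega>}"
  define SB where "SB = {\<omega> \<in> space J.IP. SBc \<omega>}"
  have SAs: "SA \<in> sets J.IP" unfolding SA_def using predE[OF J.pred_IP[OF SAm]] .
  have SBs: "SB \<in> sets J.IP" unfolding SB_def using predE[OF J.pred_IP[OF SBm]] .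
  have stm: "{\<omega> \<in> space J.IP. stops A (fst \<omega>) (snd \<omega>)} \<in> sets J.IP"
    using predE[OF J.pred_IP[OF J.stops_Om]] .
  have "emeasure J.IP SA + emeasure J.IP SB = emeasure J.IP (SA \<union> SB)"
    using SAs SBs by (intro plus_emeasure) (auto simp: SA_def SB_def SAc_def SBc_def)
  also have "SA \<union> SB = {\<omega> \<in> space J.IP. stops A (fst \<omega>) (snd \<omega>)}"
    by (auto simp: SA_def SB_def SAc_def SBc_def)
  also have "emeasure J.IP \<dots> = 1"
    using stm AEs by (intro PI.emeasure_eq_1_AE) auto
  finally have sum1: "emeasure J.IP SA + emeasure J.IP SB = 1" .
  define pA where "pA = measure J.IP SA"
  define pB where "pB = measure J.IP SB"
  have eA: "emeasure J.IP SA = ennreal pA" unfolding pA_def by (simp add: PI.emeasure_eq_measure)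
  have eB: "emeasure J.IP SB = ennreal pB" unfolding pB_def by (simp add: PI.emeasure_eq_measure)
  have pA0: "0 \<le> pA" and pB0: "0 \<le> pB" unfolding pA_def pB_def by auto
  have pApB: "pA + pB = 1"
    using sum1 pA0 pB0 unfolding eA eB by (simp add: ennreal_plus[symmetric] del: ennreal_plus)
  have pBd: "pB \<le> \<delta>" using pacmu unfolding pB_def SB_def SBc_def by simp
  have pA1: "1 - \<delta> \<le> pA" using pApB pBd by simp
  have pApos: "0 < pA" using pA1 d1 by simp
  define k where "k = pA / \<delta>"
  have k1: "1 \<le> k" unfolding k_def using pA1 d0 d1 by (simp add: field_simps)
  have kd: "k * \<delta> = pA" unfolding k_def using d0 by simp
  define LA where "LA \<omega> = (if SAc \<omega> then Lam rho (hist A (fst \<omega>) (snd \<omega>) (tau A (fst \<omega>) (snd \<omega>))) else 0)" for \<omega>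
  define LB where "LB \<omega> = (if SBc \<omega> then Lam rho (hist A (fst \<omega>) (snd \<omega>) (tau A (fst \<omega>) (snd \<omega>))) else 0)" for \<omega>
  have LAm: "LA \<in> borel_measurable Om" unfolding LA_def SAc_def by (rule LA_Om)
  have LBm: "LB \<in> borel_measurable Om" unfolding LB_def SBc_def by (rule LA_Om)
  have QA: "(\<integral>\<^sup>+\<omega>. LA \<omega> \<partial>J.IP) \<le> ennreal \<delta>"
  proof -
    have "(\<integral>\<^sup>+\<omega>. LA \<omega> \<partial>J.IP) = (\<integral>\<^sup>+\<omega>. (if SAc \<omega> then 1 else 0) \<partial>Q.IP)"
      unfolding LA_def SAc_def using C.cm_j[where phi="\<lambda>d. d = best_arm mu"] by simp
    also have "\<dots> = emeasure Q.IP {\<omega> \<in> space Q.IP. SAc \<omega>}"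
      by (rule ind_int) (rule Q.pred_IP[OF SAm])
    also have "\<dots> \<le> emeasure Q.IP {\<omega> \<in> space Q.IP. stops A (fst \<omega>) (snd \<omega>) \<and> decision A (fst \<omega>) (snd \<omega>) \<noteq> best_arm lam}"
    proof (rule emeasure_mono)
      show "{\<omega> \<in> space Q.IP. stops A (fst \<omega>) (snd \<omega>) \<and> decision A (fst \<omega>) (snd \<omega>) \<noteq> best_arm lam} \<in> sets Q.IP"
        by (rule predE[OF Q.pred_IP]) measurable
    qed (auto simp: SAc_def neq[symmetric])
    also have "\<dots> \<le> ennreal \<delta>" using paclam by (simp add: QI.emeasure_eq_measure ennreal_leI)
    finally show ?thesis .
  qed
  have QB: "(\<integral>\<^sup>+\<omega>. LB \<omega> \<partial>J.IP) \<le> 1"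
  proof -
    have "(\<integral>\<^sup>+\<omega>. LB \<omega> \<partial>J.IP) = (\<integral>\<^sup>+\<omega>. (if SBc \<omega> then 1 else 0) \<partial>Q.IP)"
      unfolding LB_def SBc_def using C.cm_j[where phi="\<lambda>d. d \<noteq> best_arm mu"] by simp
    also have "\<dots> = emeasure Q.IP {\<omega> \<in> space Q.IP. SBc \<omega>}"
      by (rule ind_int) (rule Q.pred_IP[OF SBm])
    also have "\<dots> \<le> 1" by (rule QI.emeasure_le_1)
    finally show ?thesis .
  qed
  define Gp where "Gp \<omega> = (\<Sum>s. if J.Cj s \<omega> then (\<lambda>a x. ennreal (g a (fst x))) (arm A (fst \<omega>) (snd \<omega>) s) (snd (obsf A (fst \<omega>) (snd \<omega>) s)) else 0)" for \<omega>
  define Gm where "Gm \<omega> = (\<Sum>s. if J.Cj s \<omega> then (\<lambda>a x. ennreal (- g a (fst x))) (arm A (fst \<omega>) (snd \<omega>) s) (snd (obsf A (fst \<omega>) (snd \<omega>) s)) else 0)" for \<omega>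
  have Gpm: "Gp \<in> borel_measurable Om" unfolding Gp_def by (rule J.G_Om) measurable
  have Gmm: "Gm \<in> borel_measurable Om" unfolding Gm_def by (rule J.G_Om) measurable
  have Xp: "(\<integral>\<^sup>+\<omega>. Gp \<omega> \<partial>J.IP) = (\<Sum>a\<in>UNIV. Ep a * Na a)"
    unfolding Gp_def Na_def
    by (subst J.wald_j[where Ma=Ma]) (auto simp: fst_integral Ep_def)
  have Xm: "(\<integral>\<^sup>+\<omega>. Gm \<omega> \<partial>J.IP) = (\<Sum>a\<in>UNIV. Em a * Na a)"
    unfolding Gm_def Na_def
    by (subst J.wald_j[where Ma=Ma]) (auto simp: fst_integral[where f="\<lambda>r. - g _ r"] Em_def)
  have armf: "arm A Z u s = fst (obsf A Z u s)" for Z u s by (simp add: obsf_eq)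
  have pw: "AE \<omega> in J.IP. Gm \<omega> + (if SAc \<omega> then ennreal (1 + ln k) else 0) + (if SBc \<omega> then 1 else 0)
      \<le> Gp \<omega> + ennreal k * LA \<omega> + LB \<omega>"
    using AEs
  proof eventually_elim
    fix \<omega> :: "('a \<times> nat \<Rightarrow> real \<times> real) \<times> real"
    assume st: "stops A (fst \<omega>) (snd \<omega>)"
    obtain Z u where om: "\<omega> = (Z,u)" by (cases \<omega>)
    define T where "T = tau A Z u"
    define x where "x s = g (fst (obsf A Z u s)) (fst (snd (obsf A Z u s)))" for s
    have st': "stops A Z u" using st om by simp
    have gp: "Gp \<omega> = (\<Sum>s<T. ennreal (x s))"
    proof -
      have "Gp \<omega> = (\<Sum>s. if s < T then ennreal (x s) else 0)"
        unfolding Gp_def om fst_conv snd_conv T_def x_def armf using J.Cj_tau[OF st'] by simp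
      then show ?thesis by (simp add: suminf_lessT)
    qed
    have gm: "Gm \<omega> = (\<Sum>s<T. ennreal (- x s))"
    proof -
      have "Gm \<omega> = (\<Sum>s. if s < T then ennreal (- x s) else 0)"
        unfolding Gm_def om fst_conv snd_conv T_def x_def armf using J.Cj_tau[OF st'] by simp
      then show ?thesis by (simp add: suminf_lessT)
    qed
    have lm: "Lam rho (hist A Z u T) = (\<Prod>s<T. ennreal (exp (- x s)))"
      unfolding Lam_hist rho_def x_def ..
    show "Gm \<omega> + (if SAc \<omega> then ennreal (1 + ln k) else 0) + (if SBc \<omega> then 1 else 0)
      \<le> Gp \<omega> + ennreal k * LA \<omega> + LB \<omega>"
    proof (cases "SAc \<omega>")
      case True
      then have nb: "\<not> SBc \<omega>" unfolding SAc_def SBc_def by simp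
      have "Gm \<omega> + ennreal (1 + ln k) \<le> Gp \<omega> + ennreal k * Lam rho (hist A Z u T)"
        unfolding gp gm lm by (rule pw_ineq[OF k1])
      then show ?thesis using True nb unfolding LA_def LB_def om fst_conv snd_conv T_def by simp
    next
      case False
      then have sb: "SBc \<omega>" using st unfolding SAc_def SBc_def by simp
      have "Gm \<omega> + ennreal (1 + ln 1) \<le> Gp \<omega> + ennreal 1 * Lam rho (hist A Z u T)"
        unfolding gp gm lm by (rule pw_ineq) simp
      then show ?thesis using False sb unfolding LA_def LB_def om fst_conv snd_conv T_def by simp
    qed
  qed
  have SAi: "(\<lambda>\<omega>. if SAc \<omega> then ennreal (1 + ln k) else 0) \<in> borel_measurable J.IP"
    by (intro measurable_If predE[OF J.pred_IP[OF SAm]]) auto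
  have SA1: "(\<lambda>\<omega>. if SAc \<omega> then 1 else (0::ennreal)) \<in> borel_measurable J.IP"
    by (intro measurable_If predE[OF J.pred_IP[OF SAm]]) auto
  have SBi: "(\<lambda>\<omega>. if SBc \<omega> then 1 else (0::ennreal)) \<in> borel_measurable J.IP"
    by (intro measurable_If predE[OF J.pred_IP[OF SBm]]) auto
  have intL: "(\<integral>\<^sup>+\<omega>. Gm \<omega> + (if SAc \<omega> then ennreal (1 + ln k) else 0) + (if SBc \<omega> then 1 else 0) \<partial>J.IP)
     = (\<integral>\<^sup>+\<omega>. Gm \<omega> \<partial>J.IP) + ennreal (1 + ln k) * ennreal pA + ennreal pB"
  proof -
    have a: "(\<integral>\<^sup>+\<omega>. (if SAc \<omega> then ennreal (1 + ln k) else 0) \<partial>J.IP) = ennreal (1 + ln k) * ennreal pA"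
    proof -
      have "(\<integral>\<^sup>+\<omega>. (if SAc \<omega> then ennreal (1 + ln k) else 0) \<partial>J.IP) = (\<integral>\<^sup>+\<omega>. ennreal (1 + ln k) * (if SAc \<omega> then 1 else 0) \<partial>J.IP)"
        by (intro nn_integral_cong) simp
      also have "\<dots> = ennreal (1 + ln k) * (\<integral>\<^sup>+\<omega>. (if SAc \<omega> then 1 else 0) \<partial>J.IP)"
        using SA1 by (rule nn_integral_cmult)
      also have "\<dots> = ennreal (1 + ln k) * ennreal pA"
        using ind_int[OF J.pred_IP[OF SAm]] eA unfolding SA_def by simp
      finally show ?thesis .
    qed
    have b: "(\<integral>\<^sup>+\<omega>. (if SBc \<omega> then 1 else 0) \<partial>J.IP) = ennreal pB"
      using ind_int[OF J.pred_IP[OF SBm]] eB unfolding SB_def by simp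
    show ?thesis
      using J.meas_IP[OF Gmm] SAi SBi
      by (simp add: nn_integral_add a b)
  qed
  have intR: "(\<integral>\<^sup>+\<omega>. Gp \<omega> + ennreal k * LA \<omega> + LB \<omega> \<partial>J.IP)
     = (\<integral>\<^sup>+\<omega>. Gp \<omega> \<partial>J.IP) + ennreal k * (\<integral>\<^sup>+\<omega>. LA \<omega> \<partial>J.IP) + (\<integral>\<^sup>+\<omega>. LB \<omega> \<partial>J.IP)"
    using J.meas_IP[OF Gpm] J.meas_IP[OF LAm] J.meas_IP[OF LBm]
    by (simp add: nn_integral_add nn_integral_cmult)
  have main: "(\<integral>\<^sup>+\<omega>. Gm \<omega> \<partial>J.IP) + ennreal (1 + ln k) * ennreal pA + ennreal pB
     \<le> (\<integral>\<^sup>+\<omega>. Gp \<omega> \<partial>J.IP) + ennreal k * (\<integral>\<^sup>+\<omega>. LA \<omega> \<partial>J.IP) + (\<integral>\<^sup>+\<omega>. LB \<omega> \<partial>J.IP)"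
    using nn_integral_mono_AE[OF pw] unfolding intL intR .
  define n where "n a = enn2real (Na a)" for a
  define xp where "xp = (\<Sum>a\<in>UNIV. enn2real (Ep a) * n a)"
  define xm where "xm = (\<Sum>a\<in>UNIV. enn2real (Em a) * n a)"
  have n0: "0 \<le> n a" for a unfolding n_def by simp
  have Ne: "Na a = ennreal (n a)" for a unfolding n_def using Nfin[of a] by (simp add: ennreal_enn2real_if)
  have Epe: "Ep a = ennreal (enn2real (Ep a))" for a using Ep_fin[of a] by (simp add: ennreal_enn2real_if)
  have Eme: "Em a = ennreal (enn2real (Em a))" for a using Em_fin[of a] by (simp add: ennreal_enn2real_if)
  have xp0: "0 \<le> xp" unfolding xp_def using n0 by (auto intro!: sum_nonneg)
  have xm0: "0 \<le> xm" unfolding xm_def using n0 by (auto intro!: sum_nonneg)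
  have Xpe: "(\<integral>\<^sup>+\<omega>. Gp \<omega> \<partial>J.IP) = ennreal xp"
  proof -
    have "(\<Sum>a\<in>UNIV. Ep a * Na a) = (\<Sum>a\<in>UNIV. ennreal (enn2real (Ep a) * n a))"
      by (intro sum.cong refl) (subst Epe, simp add: Ne ennreal_mult n0)
    also have "\<dots> = ennreal xp" unfolding xp_def using n0 by (intro sum_ennreal) simp
    finally show ?thesis using Xp by simp
  qed
  have Xme: "(\<integral>\<^sup>+\<omega>. Gm \<omega> \<partial>J.IP) = ennreal xm"
  proof -
    have "(\<Sum>a\<in>UNIV. Em a * Na a) = (\<Sum>a\<in>UNIV. ennreal (enn2real (Em a) * n a))"
      by (intro sum.cong refl) (subst Eme, simp add: Ne ennreal_mult n0)
    also have "\<dots> = ennreal xm" unfolding xm_def using n0 by (intro sum_ennreal) simp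
    finally show ?thesis using Xm by simp
  qed
  have lk0: "0 \<le> 1 + ln k" using k1 by simp
  have "ennreal (xm + (1 + ln k) * pA + pB) = ennreal xm + ennreal (1 + ln k) * ennreal pA + ennreal pB"
    using xm0 lk0 pA0 pB0 by (simp add: ennreal_plus ennreal_mult)
  also have "\<dots> \<le> ennreal xp + ennreal k * ennreal \<delta> + 1"
    using main QA QB unfolding Xpe Xme by (meson add_mono order_refl mult_left_mono zero_le order_trans)
  also have "\<dots> = ennreal (xp + k * \<delta> + 1)"
    using xp0 k1 d0 by (simp add: ennreal_plus ennreal_mult)
  finally have h1: "xm + (1 + ln k) * pA + pB \<le> xp + pA + 1"
    using xp0 k1 d0 kd by (subst (asm) ennreal_le_iff) auto
  have h2: "ln k = ln pA + ln (1/\<delta>)" unfolding k_def using pApos d0 by (simp add: ln_div)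
  have h3: "pA - 1 \<le> pA * ln pA"
  proof -
    have "ln (1/pA) \<le> 1/pA - 1" using pApos by (intro ln_le_minus_one) simp
    then have "- ln pA \<le> 1/pA - 1" using pApos by (simp add: ln_div)
    then have "pA * (- ln pA) \<le> pA * (1/pA - 1)" using pApos by (intro mult_left_mono) auto
    then show ?thesis using pApos by (simp add: algebra_simps)
  qed
  have lnd: "0 \<le> ln (1/\<delta>)" using d0 d1 by simp
  have h4: "(1 - \<delta>) * ln (1/\<delta>) \<le> pA * ln (1/\<delta>)" using pA1 lnd by (rule mult_right_mono)
  have h5: "(1 + ln k) * pA = pA + pA * ln pA + pA * ln (1/\<delta>)" unfolding h2 by (simp add: algebra_simps)
  have h6: "xp - xm = (\<Sum>a\<in>UNIV. enn2real (Na a) * kl nu (mu a) (lam a))"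
    unfolding xp_def xm_def n_def sum_subtractf[symmetric] using Ep_Em
    by (intro sum.cong refl) (simp add: algebra_simps flip: Ep_Em)
  show ?thesis using h1 h3 h4 h5 h6 pB0 pA0 by linarith
qed

end


lemma per_delta:
  fixes A :: "'k::finite alg" and mu c :: "'k \<Rightarrow> real"
  assumes EF: "exp_family H theta b Theta" and CF: "cost_family nuc l"
    and valid: "valid_alg A" and PAC: "is_PAC (expfam_nu H theta b) nuc l \<delta> A"
    and d0: "0 < \<delta>" and d1: "\<delta> < 1/2"
    and muin: "\<forall>a. mu a \<in> {0..1}" and ub: "unique_best mu" and cin: "\<forall>a. c a \<in> {l..1}"
    and fin: "(\<integral>\<^sup>+\<omega>. Jcost A (fst \<omega>) (snd \<omega>) \<partial>inst_measure (expfam_nu H theta b) nuc mu c) \<noteq> \<infinity>"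
  shows "\<exists>n::'k \<Rightarrow> real. (\<forall>a. 0 \<le> n a) \<and>
     (\<integral>\<^sup>+\<omega>. Jcost A (fst \<omega>) (snd \<omega>) \<partial>inst_measure (expfam_nu H theta b) nuc mu c) = ennreal (\<Sum>a\<in>UNIV. c a * n a) \<and>
     (\<forall>lam\<in>Alt mu. (1 - \<delta>) * ln (1/\<delta>) - 2 \<le> (\<Sum>a\<in>UNIV. n a * kl (expfam_nu H theta b) (mu a) (lam a)))"
proof -
  interpret S: setting H theta b Theta nuc l A mu c
    using EF CF valid muin cin by unfold_locales auto
  have pacmu: "measure S.J.IP {\<omega> \<in> space S.J.IP. stops A (fst \<omega>) (snd \<omega>) \<and> decision A (fst \<omega>) (snd \<omega>) \<noteq> best_arm mu} \<le> \<delta>"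
    and AEs: "AE \<omega> in S.J.IP. stops A (fst \<omega>) (snd \<omega>)"
  proof -
    have "measure (inst_measure (expfam_nu H theta b) nuc mu c) {\<omega> \<in> space (inst_measure (expfam_nu H theta b) nuc mu c). stops A (fst \<omega>) (snd \<omega>) \<and> decision A (fst \<omega>) (snd \<omega>) \<noteq> best_arm mu} \<le> \<delta> \<and>
        (AE \<omega> in inst_measure (expfam_nu H theta b) nuc mu c. stops A (fst \<omega>) (snd \<omega>))"
      using PAC muin cin ub unfolding is_PAC_def by blast
    then show "measure S.J.IP {\<omega> \<in> space S.J.IP. stops A (fst \<omega>) (snd \<omega>) \<and> decision A (fst \<omega>) (snd \<omega>) \<noteq> best_arm mu} \<le> \<delta>"
      and "AE \<omega> in S.J.IP. stops A (fst \<omega>) (snd \<omega>)" unfolding S.IP_eq by auto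
  qed
  define n where "n a = enn2real (S.Na a)" for a
  have n0: "0 \<le> n a" for a unfolding n_def by simp
  have EJ: "(\<integral>\<^sup>+\<omega>. Jcost A (fst \<omega>) (snd \<omega>) \<partial>S.J.IP) = (\<Sum>a\<in>UNIV. ennreal (c a) * S.Na a)"
    by (rule S.cost_wald[OF AEs])
  have Nfin: "S.Na a \<noteq> \<infinity>" for a
  proof
    assume inf: "S.Na a = \<infinity>"
    have cpos: "0 < c a" using cin S.l_pos by (metis atLeastAtMost_iff less_le_trans)
    have "ennreal (c a) * S.Na a \<le> (\<Sum>a\<in>UNIV. ennreal (c a) * S.Na a)"
      by (rule member_le_sum) auto
    moreover have "ennreal (c a) * S.Na a = \<infinity>" using inf cpos by (simp add: ennreal_mult_eq_top_iff)
    ultimately show False using fin EJ unfolding S.IP_eq by (simp add: top_unique)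
  qed
  have Ne: "S.Na a = ennreal (n a)" for a unfolding n_def using Nfin[of a] by (simp add: ennreal_enn2real_if)
  have c0: "0 \<le> c a" for a using cin S.l_pos by (metis atLeastAtMost_iff less_le_trans less_imp_le)
  have EJ2: "(\<integral>\<^sup>+\<omega>. Jcost A (fst \<omega>) (snd \<omega>) \<partial>inst_measure (expfam_nu H theta b) nuc mu c) = ennreal (\<Sum>a\<in>UNIV. c a * n a)"
  proof -
    have "(\<Sum>a\<in>UNIV. ennreal (c a) * S.Na a) = (\<Sum>a\<in>UNIV. ennreal (c a * n a))"
      using c0 n0 by (simp add: Ne ennreal_mult)
    also have "\<dots> = ennreal (\<Sum>a\<in>UNIV. c a * n a)" using c0 n0 by (intro sum_ennreal) auto
    finally show ?thesis using EJ unfolding S.IP_eq by simp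
  qed
  have bound: "(1 - \<delta>) * ln (1/\<delta>) - 2 \<le> (\<Sum>a\<in>UNIV. n a * kl (expfam_nu H theta b) (mu a) (lam a))"
    if lam: "lam \<in> Alt mu" for lam
  proof -
    have lamin: "\<forall>a. lam a \<in> {0..1}" and ubl: "unique_best lam" and neq: "best_arm lam \<noteq> best_arm mu"
      using lam unfolding Alt_def by auto
    interpret S2: setting2 H theta b Theta nuc l A mu c lam
      using lamin by unfold_locales auto
    have paclam: "measure S2.Q.IP {\<omega> \<in> space S2.Q.IP. stops A (fst \<omega>) (snd \<omega>) \<and> decision A (fst \<omega>) (snd \<omega>) \<noteq> best_arm lam} \<le> \<delta>"
    proof -
      have "measure (inst_measure (expfam_nu H theta b) nuc lam c) {\<omega> \<in> space (inst_measure (expfam_nu H theta b) nuc lam c). stops A (fst \<omega>) (snd \<omega>) \<and> decision A (fst \<omega>) (snd \<omega>) \<noteq> best_arm lam} \<le> \<delta>"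
        using PAC lamin cin ubl unfolding is_PAC_def by blast
      then show ?thesis unfolding S2.IQ_eq .
    qed
    have "(1 - \<delta>) * ln (1/\<delta>) - 2 \<le> (\<Sum>a\<in>UNIV. enn2real (S.Na a) * kl (expfam_nu H theta b) (mu a) (lam a))"
      by (rule S2.lam_bound[OF AEs pacmu paclam neq d0 d1 Nfin])
    then show ?thesis unfolding n_def .
  qed
  show ?thesis using n0 EJ2 bound by blast
qed



lemma one_div_ereal: "v \<noteq> 0 \<Longrightarrow> (1::ereal) / ereal v = ereal (1 / v)"
  by (metis ereal_divide one_ereal_def)

theorem theorem1:
  fixes H :: "real measure" and theta b :: "real \<Rightarrow> real" and Theta :: "real set"
    and nuc :: "real \<Rightarrow> real measure" and l :: real
    and Alg :: "real \<Rightarrow> 'k::finite alg" and mu c :: "'k \<Rightarrow> real"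
  assumes "exp_family H theta b Theta"
    and "cost_family nuc l"
    and "\<forall>delta\<in>{0<..<1}. valid_alg (Alg delta) \<and> is_PAC (expfam_nu H theta b) nuc l delta (Alg delta)"
    and "\<forall>a. mu a \<in> {0..1}" and "unique_best mu"
    and "\<forall>a. c a \<in> {l..1}"
  shows "Liminf (at_right 0) (\<lambda>delta.
            expected_cost (expfam_nu H theta b) nuc mu c (Alg delta) / ereal (ln (1 / delta)))
         \<ge> Tstar (expfam_nu H theta b) mu c"
proof -
  note EF = assms(1) and CF = assms(2) and ALG = assms(3) and muin = assms(4) and ub = assms(5) and cin = assms(6)
  let ?nu = "expfam_nu H theta b"
  define f where "f delta = expected_cost ?nu nuc mu c (Alg delta) / ereal (ln (1 / delta))" for delta
  define V where "V = (SUP w\<in>prob_simplex. INF lam\<in>Alt mu. ereal (\<Sum>a\<in>UNIV. w a / c a * kl ?nu (mu a) (lam a)))"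
  define B where "B delta = (1 - delta) * ln (1 / delta) - 2" for delta :: real
  have T: "Tstar ?nu mu c = 1 / V" unfolding Tstar_def V_def ..
  have l0: "0 < l" using CF unfolding cost_family_def by blast
  have cpos: "0 < c a" for a using cin l0 by (metis atLeastAtMost_iff less_le_trans)
  have EJ_def': "expected_cost ?nu nuc mu c (Alg delta) = enn2ereal (\<integral>\<^sup>+\<omega>. Jcost (Alg delta) (fst \<omega>) (snd \<omega>) \<partial>inst_measure ?nu nuc mu c)" for delta
    unfolding expected_cost_def ..
  have f0: "0 \<le> f delta" if "0 < delta" "delta < 1" for delta
  proof -
    have "0 < ln (1 / delta)" using that by simp
    then show ?thesis unfolding f_def EJ_def' by (simp add: divide_ereal_def ereal_inverse_nonneg_iff)
  qed
  have key: "ereal (yp * B delta / ln (1 / delta)) \<le> f delta"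
    if d0: "0 < delta" and d1: "delta < 1/2" and Bp: "0 < B delta" and yp0: "0 < yp"
      and Vv: "V = ereal v" and ypv: "yp * v < 1" and v0: "0 \<le> v" for delta yp v
  proof -
    define L where "L = ln (1 / delta)"
    have L0: "0 < L" unfolding L_def using d0 d1 by simp
    have dd: "delta \<in> {0<..<1}" using d0 d1 by simp
    have va: "valid_alg (Alg delta)" and pac: "is_PAC ?nu nuc l delta (Alg delta)" using ALG dd by auto
    define EJ where "EJ = (\<integral>\<^sup>+\<omega>. Jcost (Alg delta) (fst \<omega>) (snd \<omega>) \<partial>inst_measure ?nu nuc mu c)"
    show ?thesis
    proof (cases "EJ = \<infinity>")
      case True
      then show ?thesis unfolding f_def EJ_def' EJ_def[symmetric] L_def[symmetric] using L0
        by (simp add: divide_ereal_def)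
    next
      case False
      obtain n where n0: "\<forall>a. 0 \<le> n a" and EJn: "EJ = ennreal (\<Sum>a\<in>UNIV. c a * n a)"
        and bnd: "\<forall>lam\<in>Alt mu. B delta \<le> (\<Sum>a\<in>UNIV. n a * kl ?nu (mu a) (lam a))"
        using per_delta[OF EF CF va pac d0 d1 muin ub cin False[unfolded EJ_def]] unfolding EJ_def B_def by blast
      define S where "S = (\<Sum>a\<in>UNIV. c a * n a)"
      have S0: "0 \<le> S" unfolding S_def using n0 cpos by (auto intro!: sum_nonneg simp: less_imp_le)
      have fS: "f delta = ereal (S / L)"
        unfolding f_def EJ_def' EJ_def[symmetric] L_def[symmetric] EJn S_def[symmetric] using S0 L0
        by (simp add: ereal_divide)
      have AltNE: "Alt mu \<noteq> {}"
      proof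
        assume e: "Alt mu = {}"
        define w0 where "w0 = (\<lambda>a::'k. 1 / real CARD('k))"
        have cardpos: "0 < real CARD('k)" by simp
        have "(\<Sum>a\<in>UNIV. w0 a) = 1" unfolding w0_def using cardpos by (simp add: sum_constant)
        moreover have "\<forall>a. 0 \<le> w0 a" unfolding w0_def by simp
        ultimately have "w0 \<in> prob_simplex" unfolding prob_simplex_def by blast
        then have ne: "(prob_simplex :: ('k \<Rightarrow> real) set) \<noteq> {}" by blast
        have "V = (SUP w\<in>(prob_simplex :: ('k \<Rightarrow> real) set). (\<top>::ereal))" unfolding V_def e INF_empty ..
        also have "\<dots> = \<top>" using ne by (rule SUP_const)
        finally have "V = \<infinity>" by (simp add: top_ereal_def)
        then show False using Vv by simp
      qed
      obtain lam0 where lam0: "lam0 \<in> Alt mu" using AltNE by blast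
      have Spos: "0 < S"
      proof (rule ccontr)
        assume "\<not> 0 < S"
        then have "S = 0" using S0 by simp
        then have "\<forall>a\<in>UNIV. c a * n a = 0" unfolding S_def
          using n0 cpos by (subst (asm) sum_nonneg_eq_0_iff) (auto simp: less_imp_le)
        then have "\<forall>a. n a = 0" using cpos by (metis UNIV_I less_irrefl mult_eq_0_iff)
        then have "(\<Sum>a\<in>UNIV. n a * kl ?nu (mu a) (lam0 a)) = 0" by simp
        then show False using bnd lam0 Bp by fastforce
      qed
      define w where "w a = c a * n a / S" for a
      have wS: "w \<in> prob_simplex"
      proof -
        have "\<forall>a. 0 \<le> w a" unfolding w_def using n0 cpos Spos by (auto intro!: divide_nonneg_pos simp: less_imp_le)
        moreover have "(\<Sum>a\<in>UNIV. w a) = 1" unfolding w_def sum_divide_distrib[symmetric] S_def[symmetric]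
          using Spos by simp
        ultimately show ?thesis unfolding prob_simplex_def by simp
      qed
      have "ereal (B delta / S) \<le> (INF lam\<in>Alt mu. ereal (\<Sum>a\<in>UNIV. w a / c a * kl ?nu (mu a) (lam a)))"
      proof (rule INF_greatest)
        fix lam assume lam: "lam \<in> Alt mu"
        have "(\<Sum>a\<in>UNIV. w a / c a * kl ?nu (mu a) (lam a)) = (\<Sum>a\<in>UNIV. n a * kl ?nu (mu a) (lam a)) / S"
          unfolding sum_divide_distrib w_def using cpos by (intro sum.cong refl) (simp add: field_simps less_imp_neq[symmetric])
        moreover have "B delta / S \<le> (\<Sum>a\<in>UNIV. n a * kl ?nu (mu a) (lam a)) / S"
          using bnd lam Spos by (intro divide_right_mono) auto
        ultimately show "ereal (B delta / S) \<le> ereal (\<Sum>a\<in>UNIV. w a / c a * kl ?nu (mu a) (lam a))" by simp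
      qed
      also have "\<dots> \<le> V" unfolding V_def using wS by (rule SUP_upper)
      finally have "B delta / S \<le> v" using Vv by simp
      then have BSv: "B delta \<le> S * v" using Spos by (simp add: pos_divide_le_eq mult.commute)
      have "yp * B delta \<le> yp * (S * v)" using BSv yp0 by (intro mult_left_mono) auto
      also have "\<dots> = S * (yp * v)" by simp
      also have "\<dots> \<le> S * 1" using S0 ypv by (intro mult_left_mono) auto
      finally have "yp * B delta / L \<le> S / L" using L0 by (intro divide_right_mono) auto
      then show ?thesis unfolding fS L_def by simp
    qed
  qed
  have Lt: "filterlim (\<lambda>delta. ln (1 / delta)) at_top (at_right (0::real))"
    using filterlim_compose[OF ln_at_top filterlim_inverse_at_top_right] by (simp add: inverse_eq_divide)
  have ev01: "eventually (\<lambda>delta. 0 < delta \<and> delta < 1/2) (at_right (0::real))"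
  proof -
    have "eventually (\<lambda>delta. delta < 1/2) (at_right (0::real))"
      using order_tendstoD(2)[OF tendsto_ident_at[of "0::real" "{0<..}"], of "1/2"] by simp
    moreover have "eventually (\<lambda>delta. 0 < delta) (at_right (0::real))" by (rule eventually_at_right_less)
    ultimately show ?thesis by eventually_elim auto
  qed
  have Bev: "eventually (\<lambda>delta. 0 < B delta) (at_right (0::real))"
  proof -
    have "eventually (\<lambda>delta. 5 \<le> ln (1 / delta)) (at_right (0::real))"
      using Lt unfolding filterlim_at_top by blast
    with ev01 show ?thesis
    proof eventually_elim
      case (elim delta)
      then have "(1/2) * ln (1 / delta) \<le> (1 - delta) * ln (1 / delta)"
        by (intro mult_right_mono) auto
      then show ?case using elim unfolding B_def by linarith
    qed
  qed
  have main: "1 / V \<le> Liminf (at_right 0) f"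
    unfolding le_Liminf_iff
  proof (intro allI impI)
    fix y assume y: "y < 1 / V"
    show "\<forall>\<^sub>F delta in at_right 0. y < f delta"
    proof (cases "y < 0")
      case True
      show ?thesis using ev01
      proof eventually_elim
        case (elim delta)
        then have "0 \<le> f delta" using f0[of delta] by simp
        then show ?case using True by (rule less_le_trans[rotated])
      qed
    next
      case False
      then have y0: "0 \<le> y" by simp
      obtain z where yz: "y < z" and zV: "z < 1 / V" using y dense by blast
      obtain yp where zyp: "z = ereal yp" using yz zV by (cases z) auto
      obtain yr where yyr: "y = ereal yr" using y0 yz by (cases y) auto
      have yr0: "0 \<le> yr" using y0 yyr by simp
      have yryp: "yr < yp" using yz zyp yyr by simp
      have yp0: "0 < yp" using yr0 yryp by simp
      obtain v where Vv: "V = ereal v" and v0: "0 \<le> v" and ypv: "yp * v < 1"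
      proof (cases V)
        case (real v)
        show ?thesis
        proof (cases "v = 0")
          case True then show ?thesis using that[of 0] real by simp
        next
          case False
          then have iv: "1 / V = ereal (1 / v)" using real by (simp add: one_div_ereal)
          then have "yp < 1 / v" using zV zyp by simp
          moreover have "0 < 1 / v" using yp0 \<open>yp < 1 / v\<close> by linarith
          ultimately have vp: "0 < v" by (simp add: zero_less_divide_iff)
          then have "yp * v < 1" using \<open>yp < 1 / v\<close> by (simp add: pos_less_divide_eq)
          then show ?thesis using that[of v] real vp by simp
        qed
      next
        case PInf then show ?thesis using zV zyp yp0 by (simp add: divide_ereal_def)
      next
        case MInf then show ?thesis using zV zyp yp0 by (simp add: divide_ereal_def)
      qed
      have lim: "((\<lambda>delta. yp * B delta / ln (1 / delta)) \<longlongrightarrow> yp) (at_right 0)"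
      proof -
        have l1: "((\<lambda>delta::real. yp * (1 - delta) - 2 * yp / ln (1 / delta)) \<longlongrightarrow> yp * (1 - 0) - 0) (at_right 0)"
          by (rule tendsto_diff[OF tendsto_mult[OF tendsto_const tendsto_diff[OF tendsto_const tendsto_ident_at]]
              tendsto_divide_0[OF tendsto_const filterlim_at_top_imp_at_infinity[OF Lt]]])
        have ev: "eventually (\<lambda>delta. yp * (1 - delta) - 2 * yp / ln (1 / delta) = yp * B delta / ln (1 / delta)) (at_right (0::real))"
          using ev01
        proof eventually_elim
          case (elim delta)
          then have "0 < ln (1 / delta)" by simp
          then show ?case unfolding B_def by (simp add: field_simps)
        qed
        have l2: "((\<lambda>delta::real. yp * (1 - delta) - 2 * yp / ln (1 / delta)) \<longlongrightarrow> yp) (at_right 0)"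
          using l1 by simp
        show ?thesis by (rule Lim_transform_eventually[OF l2 ev])
      qed
      have evh: "eventually (\<lambda>delta. yr < yp * B delta / ln (1 / delta)) (at_right 0)"
        using order_tendstoD(1)[OF lim yryp] .
      show ?thesis using ev01 Bev evh
      proof eventually_elim
        case (elim delta)
        then have "ereal (yp * B delta / ln (1 / delta)) \<le> f delta"
          using key[of delta yp v] yp0 Vv ypv v0 by auto
        moreover have "y < ereal (yp * B delta / ln (1 / delta))" using elim yyr by simp
        ultimately show ?case using less_le_trans by blast
      qed
    qed
  qed
  show ?thesis using main unfolding T f_def .
qed



end
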